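(* Let $\gamma>0$ and let $(Z_t),(\tilde Z_t)$ solve $dX_t=V_t\,dt$, $dV_t=-\gamma V_t\,dt+\sqrt{2\gamma}\,dW_t$ with deterministic initial values $z\ne\tilde z$. There exists $c>0$ (depending on $\gamma,z,\tilde z$ but not on $h$ or the coupling) such that for every $h>0$ and every coupling $\mu_h$ of $(Z^h_k,\tilde Z^h_k)_{k\in\mathbb{N}}=(Z_{hk},\tilde Z_{hk})_{k\in\mathbb{N}}$ which is Markovian and satisfies $\mu_h\bigl(\bigcap_{k\ge0}\{Q^h_k=\tilde Q^h_k\}\bigr)=1$, one has for all $k\in\mathbb{N}$ \[ \mu_h(Z^h_k\ne\tilde Z^h_k)\ge c\min\bigl(1,h^{-1}e^{-\gamma hk}\bigr). \]
   Context: $W$ is a standard $d$-dimensional Brownian motion, $Z_t=(X_t,V_t)$, $\tilde Z_t=(\tilde X_t,\tilde V_t)$, and $Q^h_k=X_{hk}+\gamma^{-1}V_{hk}$, $\tilde Q^h_k=\tilde X_{hk}+\gamma^{-1}\tilde V_{hk}$. A coupling $\mu_h$ is Markovian if $(Z^h_k,\tilde Z^h_k)_{k\in\mathbb{N}}$ is a Markov chain under $\mu_h$ with respect to its own natural filtration. *)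

theory Defs
  imports "HOL-Probability.Probability"
begin

definition is_BM1 :: "'a measure \<Rightarrow> (real \<Rightarrow> 'a \<Rightarrow> real) \<Rightarrow> bool" where
  "is_BM1 P B \<longleftrightarrow>
     prob_space P \<and>
     (\<forall>t\<ge>0. B t \<in> borel_measurable P) \<and>
     (AE \<omega> in P. B 0 \<omega> = 0 \<and> continuous_on {0..} (\<lambda>t. B t \<omega>)) \<and>
     (\<forall>s t. 0 \<le> s \<longrightarrow> s < t \<longrightarrow>
        distributed P lborel (\<lambda>\<omega>. B t \<omega> - B s \<omega>) (normal_density 0 (sqrt (t - s)))) \<and>
     (\<forall>(n::nat) (ts::nat \<Rightarrow> real). 0 \<le> ts 0 \<longrightarrow> (\<forall>i<n. ts i < ts (Suc i)) \<longrightarrow>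
        prob_space.indep_vars P (\<lambda>_. borel) (\<lambda>i \<omega>. B (ts (Suc i)) \<omega> - B (ts i) \<omega>) {..<n})"

definition is_BM :: "'a measure \<Rightarrow> (real \<Rightarrow> 'a \<Rightarrow> real ^ 'd) \<Rightarrow> bool" where
  "is_BM P W \<longleftrightarrow>
     (\<forall>i. is_BM1 P (\<lambda>t \<omega>. W t \<omega> $ i)) \<and>
     prob_space.indep_vars P (\<lambda>_. Pi\<^sub>M {0..} (\<lambda>_. borel))
        (\<lambda>i \<omega>. restrict (\<lambda>t. W t \<omega> $ i) {0..}) UNIV"

definition solves_kinetic ::
  "real \<Rightarrow> 'a measure \<Rightarrow> (real \<Rightarrow> 'a \<Rightarrow> real ^ 'd) \<Rightarrow> ((real ^ 'd) \<times> (real ^ 'd))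
     \<Rightarrow> (real \<Rightarrow> 'a \<Rightarrow> (real ^ 'd) \<times> (real ^ 'd)) \<Rightarrow> bool" where
  "solves_kinetic \<gamma> P W z Z \<longleftrightarrow>
     (\<forall>t\<ge>0. Z t \<in> borel_measurable P) \<and>
     (AE \<omega> in P. continuous_on {0..} (\<lambda>t. Z t \<omega>) \<and>
        (\<forall>t\<ge>0. fst (Z t \<omega>) = fst z + integral {0..t} (\<lambda>s. snd (Z s \<omega>)) \<and>
                snd (Z t \<omega>) = snd z - \<gamma> *\<^sub>R integral {0..t} (\<lambda>s. snd (Z s \<omega>))
                               + sqrt (2 * \<gamma>) *\<^sub>R W t \<omega>))"

definition nat_filt :: "(nat \<Rightarrow> 's::topological_space) measure \<Rightarrow> nat \<Rightarrow> (nat \<Rightarrow> 's) measure" where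
  "nat_filt \<mu> k = vimage_algebra (space \<mu>) (\<lambda>\<omega>. restrict \<omega> {..k}) (Pi\<^sub>M {..k} (\<lambda>_. borel))"

definition markov_seq :: "(nat \<Rightarrow> 's::topological_space) measure \<Rightarrow> bool" where
  "markov_seq \<mu> \<longleftrightarrow>
     (\<forall>k. \<forall>B \<in> sets (borel :: 's measure).
        AE \<omega> in \<mu>. real_cond_exp \<mu> (nat_filt \<mu> k) (indicator {\<omega>. \<omega> (Suc k) \<in> B}) \<omega>
                 = real_cond_exp \<mu> (vimage_algebra (space \<mu>) (\<lambda>\<omega>. \<omega> k) borel)
                     (indicator {\<omega>. \<omega> (Suc k) \<in> B}) \<omega>)"

end

theory Submission
  imports Defs
begin

definition sG :: "real \<Rightarrow> real" where "sG x = x / (1 + \<bar>x\<bar>)"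

lemma sG_bound: "\<bar>sG x\<bar> \<le> 1"
proof -
  have "\<bar>x\<bar> \<le> 1 + \<bar>x\<bar>" by simp
  then show ?thesis unfolding sG_def abs_divide by (simp add: divide_le_eq)
qed

lemma sG_cont: "continuous_on UNIV sG"
  unfolding sG_def by (intro continuous_intros) (auto simp: add_pos_nonneg)

lemma sG_meas[measurable]: "sG \<in> borel_measurable borel"
  using sG_cont by (simp add: borel_measurable_continuous_onI)

lemma sG_diff:
  assumes "a \<le> b"
  shows "(b - a) / (1 + max \<bar>a\<bar> \<bar>b\<bar>)^2 \<le> sG b - sG a"
proof -
  let ?M = "max \<bar>a\<bar> \<bar>b\<bar>"
  have pa: "1 + \<bar>a\<bar> > 0" "1 + \<bar>b\<bar> > 0" by auto
  have "sG b - sG a = (b*(1+\<bar>a\<bar>) - a*(1+\<bar>b\<bar>)) / ((1+\<bar>a\<bar>)*(1+\<bar>b\<bar>))"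
    unfolding sG_def using pa by (simp add: field_simps)
  moreover have "b*(1+\<bar>a\<bar>) - a*(1+\<bar>b\<bar>) \<ge> b - a"
  proof -
    have "b*(1+\<bar>a\<bar>) - a*(1+\<bar>b\<bar>) - (b - a) = b*\<bar>a\<bar> - a*\<bar>b\<bar>" by (simp add: algebra_simps)
    moreover have "b*\<bar>a\<bar> - a*\<bar>b\<bar> \<ge> 0"
      using assms by (cases "a \<ge> 0"; cases "b \<ge> 0") (auto simp: algebra_simps intro: mult_nonpos_nonneg[of a b])
    ultimately show ?thesis by linarith
  qed
  moreover have "(1+\<bar>a\<bar>)*(1+\<bar>b\<bar>) \<le> (1 + ?M)^2"
    by (simp add: power2_eq_square mult_mono)
  moreover have "b - a \<ge> 0" using assms by simp
  moreover have "(1+\<bar>a\<bar>)*(1+\<bar>b\<bar>) > 0" using pa by simp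
  ultimately show ?thesis
    by (smt (verit) divide_left_mono divide_right_mono mult_pos_pos)

qed

lemma sG_pointwise:
  fixes N \<sigma> \<Delta> s :: real
  assumes "\<sigma> > 0" "\<Delta> > 0" "s = \<sigma> + \<Delta>"
  shows "sG ((\<Delta>/2 + N)/s) - sG ((-\<Delta>/2 + N)/s) \<ge> (\<Delta>/s) * (2/9 - 8/81 * (N^2/\<sigma>^2))"
proof -
  define a where "a = (-\<Delta>/2 + N)/s"
  define b where "b = (\<Delta>/2 + N)/s"
  define y where "y = \<bar>N\<bar>/\<sigma>"
  have sp: "s > 0" using assms by simp
  have ab: "a \<le> b" unfolding a_def b_def using sp assms by (simp add: divide_right_mono)
  have ba: "b - a = \<Delta>/s" unfolding a_def b_def using sp by (simp add: field_simps)
  have y0: "y \<ge> 0" unfolding y_def using assms by simp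
  have Nle: "\<bar>N\<bar>/s \<le> y" unfolding y_def using assms sp
    by (intro divide_left_mono) auto
  have Dle: "(\<Delta>/2)/s \<le> 1/2" using assms sp by (simp add: field_simps)
  have "\<bar>-\<Delta>/2 + N\<bar> \<le> \<bar>N\<bar> + \<Delta>/2" using abs_triangle_ineq[of "-\<Delta>/2" N] assms by simp
  then have "\<bar>a\<bar> \<le> (\<bar>N\<bar> + \<Delta>/2)/s" unfolding a_def abs_divide abs_of_pos[OF sp] using sp
    by (intro divide_right_mono) auto
  then have "\<bar>a\<bar> \<le> \<bar>N\<bar>/s + (\<Delta>/2)/s" by (simp add: add_divide_distrib)
  moreover have "\<bar>\<Delta>/2 + N\<bar> \<le> \<bar>N\<bar> + \<Delta>/2" using abs_triangle_ineq[of "\<Delta>/2" N] assms by simp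
  then have "\<bar>b\<bar> \<le> (\<bar>N\<bar> + \<Delta>/2)/s" unfolding b_def abs_divide abs_of_pos[OF sp] using sp
    by (intro divide_right_mono) auto
  then have "\<bar>b\<bar> \<le> \<bar>N\<bar>/s + (\<Delta>/2)/s" by (simp add: add_divide_distrib)
  ultimately have M: "max \<bar>a\<bar> \<bar>b\<bar> \<le> y + 1/2" using Nle Dle by linarith
  have "(1 + max \<bar>a\<bar> \<bar>b\<bar>)^2 \<le> (3/2 + y)^2"
    using M by (intro power_mono) auto
  also have "\<dots> \<le> 9/2 + 2*y^2"
  proof -
    have "0 \<le> (y - 3/2)^2" by simp
    then show ?thesis by (simp add: power2_eq_square algebra_simps)
  qed
  finally have M2: "(1 + max \<bar>a\<bar> \<bar>b\<bar>)^2 \<le> 9/2 + 2*y^2" .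
  have inv: "1/(9/2 + 2*y^2) \<ge> 2/9 - 8/81*y^2"
  proof -
    have p: "9/2 + 2*y^2 > 0" by (simp add: add_pos_nonneg)
    have "(2/9 - 8/81*y^2) * (9/2 + 2*y^2) = 1 - 16/81 * y^4"
      by (simp add: algebra_simps power2_eq_square power4_eq_xxxx)
    also have "\<dots> \<le> 1" by simp
    finally show ?thesis using p by (simp add: le_divide_eq)
  qed
  have "(\<Delta>/s) * (2/9 - 8/81*y^2) \<le> (\<Delta>/s) * (1/(9/2 + 2*y^2))"
    using inv sp assms by (intro mult_left_mono) auto
  also have "\<dots> \<le> (\<Delta>/s) / (1 + max \<bar>a\<bar> \<bar>b\<bar>)^2"
    using M2 sp assms by (simp add: divide_left_mono add_pos_nonneg)
  also have "\<dots> \<le> sG b - sG a" using sG_diff[OF ab] ba by simp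
  finally show ?thesis unfolding a_def b_def y_def using assms by (simp add: power_divide)
qed

lemma sG_expect:
  fixes N :: "'a \<Rightarrow> real" and \<sigma> \<Delta> s :: real
  assumes "prob_space M" "N \<in> borel_measurable M" "integrable M (\<lambda>\<omega>. (N \<omega>)^2)"
    "(\<integral>\<omega>. (N \<omega>)^2 \<partial>M) \<le> \<sigma>^2" "\<sigma> > 0" "\<Delta> > 0" "s = \<sigma> + \<Delta>"
  shows "(\<integral>\<omega>. sG ((\<Delta>/2 + N \<omega>)/s) \<partial>M) - (\<integral>\<omega>. sG ((-\<Delta>/2 + N \<omega>)/s) \<partial>M) \<ge> (10/81)*(\<Delta>/s)"
proof -
  interpret prob_space M by fact
  have sp: "s > 0" using assms by simp
  have i1: "integrable M (\<lambda>\<omega>. sG ((\<Delta>/2 + N \<omega>)/s))"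
    by (rule integrable_const_bound[where B=1]) (use assms(2) sG_bound in auto)
  have i2: "integrable M (\<lambda>\<omega>. sG ((-\<Delta>/2 + N \<omega>)/s))"
    by (rule integrable_const_bound[where B=1]) (use assms(2) sG_bound in auto)
  have i3: "integrable M (\<lambda>\<omega>. (\<Delta>/s) * (2/9 - 8/81 * ((N \<omega>)^2/\<sigma>^2)))"
    using assms(3) by auto
  have "(\<integral>\<omega>. (\<Delta>/s) * (2/9 - 8/81 * ((N \<omega>)^2/\<sigma>^2)) \<partial>M)
        = (\<Delta>/s) * (2/9 - 8/81 * ((\<integral>\<omega>. (N \<omega>)^2 \<partial>M)/\<sigma>^2))"
    using assms(3) by (simp add: prob_space)
  also have "\<dots> \<ge> (\<Delta>/s) * (2/9 - 8/81)"
  proof -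
    have "(\<integral>\<omega>. (N \<omega>)^2 \<partial>M)/\<sigma>^2 \<le> 1" using assms(4,5) by (simp add: divide_le_eq_1)
    then show ?thesis using sp assms(6) by (intro mult_left_mono) auto
  qed
  finally have A: "(\<Delta>/s) * (2/9 - 8/81) \<le> (\<integral>\<omega>. (\<Delta>/s) * (2/9 - 8/81 * ((N \<omega>)^2/\<sigma>^2)) \<partial>M)" .
  also have "\<dots> \<le> (\<integral>\<omega>. sG ((\<Delta>/2 + N \<omega>)/s) - sG ((-\<Delta>/2 + N \<omega>)/s) \<partial>M)"
    by (intro integral_mono i3 Bochner_Integration.integrable_diff i1 i2 sG_pointwise assms(5-7))
  also have "\<dots> = (\<integral>\<omega>. sG ((\<Delta>/2 + N \<omega>)/s) \<partial>M) - (\<integral>\<omega>. sG ((-\<Delta>/2 + N \<omega>)/s) \<partial>M)"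
    using i1 i2 by simp
  finally show ?thesis by simp
qed


lemma coupling_bound:
  fixes F Ft :: "'a \<Rightarrow> real" and g :: "real \<Rightarrow> real"
  assumes "prob_space M" "F \<in> borel_measurable M" "Ft \<in> borel_measurable M"
    "g \<in> borel_measurable borel" "\<And>x. \<bar>g x\<bar> \<le> 1" "B \<in> sets M"
    "\<And>\<omega>. \<omega> \<in> space M \<Longrightarrow> F \<omega> \<noteq> Ft \<omega> \<Longrightarrow> \<omega> \<in> B"
  shows "\<bar>(\<integral>\<omega>. g (F \<omega>) \<partial>M) - (\<integral>\<omega>. g (Ft \<omega>) \<partial>M)\<bar> \<le> 2 * measure M B"
proof -
  interpret prob_space M by fact
  have i1: "integrable M (\<lambda>\<omega>. g (F \<omega>))"
    by (rule integrable_const_bound[where B=1]) (use assms in auto)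
  have i2: "integrable M (\<lambda>\<omega>. g (Ft \<omega>))"
    by (rule integrable_const_bound[where B=1]) (use assms in auto)
  have "\<bar>(\<integral>\<omega>. g (F \<omega>) \<partial>M) - (\<integral>\<omega>. g (Ft \<omega>) \<partial>M)\<bar> = \<bar>\<integral>\<omega>. g (F \<omega>) - g (Ft \<omega>) \<partial>M\<bar>"
    using i1 i2 by simp
  also have "\<dots> \<le> (\<integral>\<omega>. \<bar>g (F \<omega>) - g (Ft \<omega>)\<bar> \<partial>M)"
    by (rule integral_abs_bound)
  also have "\<dots> \<le> (\<integral>\<omega>. (2::real) * indicator B \<omega> \<partial>M)"
  proof (rule integral_mono)
    show "integrable M (\<lambda>\<omega>. \<bar>g (F \<omega>) - g (Ft \<omega>)\<bar>)" using i1 i2 by auto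
    show "integrable M (\<lambda>\<omega>. (2::real) * indicator B \<omega>)" using assms(6) by (intro integrable_mult_right integrable_real_indicator) (auto simp: emeasure_eq_measure)
    fix \<omega> assume \<omega>: "\<omega> \<in> space M"
    show "\<bar>g (F \<omega>) - g (Ft \<omega>)\<bar> \<le> 2 * indicator B \<omega>"
    proof (cases "F \<omega> = Ft \<omega>")
      case True then show ?thesis by (simp add: indicator_def)
    next
      case False
      then have "\<omega> \<in> B" using assms(7) \<omega> by auto
      moreover have "\<bar>g (F \<omega>) - g (Ft \<omega>)\<bar> \<le> 2" using assms(5)[of "F \<omega>"] assms(5)[of "Ft \<omega>"] by linarith
      ultimately show ?thesis by simp
    qed
  qed
  also have "\<dots> = 2 * measure M B" using assms(6) by simp
  finally show ?thesis .
qed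

definition Dinc :: "(real \<Rightarrow> 'a \<Rightarrow> real) \<Rightarrow> real \<Rightarrow> nat \<Rightarrow> 'a \<Rightarrow> real" where
  "Dinc B \<delta> l \<omega> = B (real (Suc l) * \<delta>) \<omega> - B (real l * \<delta>) \<omega>"

lemma BM1_prob: "is_BM1 P B \<Longrightarrow> prob_space P"
  unfolding is_BM1_def by auto

lemma BM1_meas: "is_BM1 P B \<Longrightarrow> t \<ge> 0 \<Longrightarrow> B t \<in> borel_measurable P"
  unfolding is_BM1_def by auto

lemma BM1_zero: "is_BM1 P B \<Longrightarrow> AE \<omega> in P. B 0 \<omega> = 0"
  unfolding is_BM1_def by (auto elim: AE_mp)

lemma Dinc_meas[measurable]: "is_BM1 P B \<Longrightarrow> \<delta> \<ge> 0 \<Longrightarrow> Dinc B \<delta> l \<in> borel_measurable P"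
  unfolding Dinc_def by (intro borel_measurable_diff BM1_meas) auto

lemma Dinc_distr:
  assumes "is_BM1 P B" "\<delta> > 0"
  shows "distributed P lborel (Dinc B \<delta> l) (normal_density 0 (sqrt \<delta>))"
proof -
  have "distributed P lborel (\<lambda>\<omega>. B (real (Suc l) * \<delta>) \<omega> - B (real l * \<delta>) \<omega>)
          (normal_density 0 (sqrt (real (Suc l) * \<delta> - real l * \<delta>)))"
    using assms unfolding is_BM1_def by (auto intro!: mult_strict_right_mono)
  moreover have "real (Suc l) * \<delta> - real l * \<delta> = \<delta>" by (simp add: algebra_simps)
  ultimately show ?thesis unfolding Dinc_def[abs_def] by simp
qed

lemma Dinc_indep:
  assumes "is_BM1 P B" "\<delta> > 0"
  shows "prob_space.indep_vars P (\<lambda>_. borel) (Dinc B \<delta>) {..<n}"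
proof -
  have H: "\<forall>(n::nat) (ts::nat \<Rightarrow> real). 0 \<le> ts 0 \<longrightarrow> (\<forall>i<n. ts i < ts (Suc i)) \<longrightarrow>
        prob_space.indep_vars P (\<lambda>_. borel) (\<lambda>i \<omega>. B (ts (Suc i)) \<omega> - B (ts i) \<omega>) {..<n}"
    using assms(1) unfolding is_BM1_def by blast
  have "prob_space.indep_vars P (\<lambda>_. borel) (\<lambda>i \<omega>. B ((\<lambda>l. real l * \<delta>) (Suc i)) \<omega> - B ((\<lambda>l. real l * \<delta>) i) \<omega>) {..<n}"
    by (rule H[rule_format]) (use assms(2) in \<open>auto intro!: mult_strict_right_mono\<close>)
  then show ?thesis unfolding Dinc_def[abs_def] .
qed

lemma Dinc_law:
  assumes "is_BM1 P B" "\<delta> > 0" "n > 0"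
  shows "distr P (Pi\<^sub>M {..<n} (\<lambda>_. borel)) (\<lambda>\<omega>. \<lambda>l\<in>{..<n}. Dinc B \<delta> l \<omega>)
       = Pi\<^sub>M {..<n} (\<lambda>_. density lborel (normal_density 0 (sqrt \<delta>)))"
proof -
  interpret prob_space P using BM1_prob[OF assms(1)] .
  have ne: "{..<n} \<noteq> {}" using assms by auto
  have "distr P (Pi\<^sub>M {..<n} (\<lambda>_. borel)) (\<lambda>\<omega>. \<lambda>l\<in>{..<n}. Dinc B \<delta> l \<omega>)
       = Pi\<^sub>M {..<n} (\<lambda>l. distr P borel (Dinc B \<delta> l))"
    using indep_vars_iff_distr_eq_PiM[OF ne, where M'="\<lambda>_. borel" and X="Dinc B \<delta>"] Dinc_indep[OF assms(1,2)]
      Dinc_meas[OF assms(1)] assms(2) by auto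
  also have "\<dots> = Pi\<^sub>M {..<n} (\<lambda>_. density lborel (normal_density 0 (sqrt \<delta>)))"
  proof (rule PiM_cong)
    fix l
    have "distr P borel (Dinc B \<delta> l) = distr P lborel (Dinc B \<delta> l)"
      by (rule distr_cong) auto
    also have "\<dots> = density lborel (normal_density 0 (sqrt \<delta>))"
      using Dinc_distr[OF assms(1,2), of l] by (simp add: distributed_def)
    finally show "distr P borel (Dinc B \<delta> l) = density lborel (normal_density 0 (sqrt \<delta>))" .
  qed simp
  finally show ?thesis .
qed

lemma Dinc_law_eq:
  fixes \<phi> :: "(nat \<Rightarrow> real) \<Rightarrow> real"
  assumes "is_BM1 P B" "is_BM1 Pt Bt" "\<delta> > 0" "n > 0"
    and phi: "\<phi> \<in> borel_measurable (Pi\<^sub>M {..<n} (\<lambda>_. borel))"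
  shows "(\<integral>\<omega>. \<phi> (\<lambda>l\<in>{..<n}. Dinc B \<delta> l \<omega>) \<partial>P) = (\<integral>\<omega>. \<phi> (\<lambda>l\<in>{..<n}. Dinc Bt \<delta> l \<omega>) \<partial>Pt)"
proof -
  have m1: "(\<lambda>\<omega>. \<lambda>l\<in>{..<n}. Dinc B \<delta> l \<omega>) \<in> measurable P (Pi\<^sub>M {..<n} (\<lambda>_. borel))"
    using Dinc_meas[OF assms(1)] assms(3) by (auto intro!: measurable_restrict)
  have m2: "(\<lambda>\<omega>. \<lambda>l\<in>{..<n}. Dinc Bt \<delta> l \<omega>) \<in> measurable Pt (Pi\<^sub>M {..<n} (\<lambda>_. borel))"
    using Dinc_meas[OF assms(2)] assms(3) by (auto intro!: measurable_restrict)
  have "(\<integral>\<omega>. \<phi> (\<lambda>l\<in>{..<n}. Dinc B \<delta> l \<omega>) \<partial>P)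
      = (\<integral>x. \<phi> x \<partial>distr P (Pi\<^sub>M {..<n} (\<lambda>_. borel)) (\<lambda>\<omega>. \<lambda>l\<in>{..<n}. Dinc B \<delta> l \<omega>))"
    by (rule integral_distr[OF m1 phi, symmetric])
  also have "\<dots> = (\<integral>x. \<phi> x \<partial>distr Pt (Pi\<^sub>M {..<n} (\<lambda>_. borel)) (\<lambda>\<omega>. \<lambda>l\<in>{..<n}. Dinc Bt \<delta> l \<omega>))"
    using Dinc_law[OF assms(1,3,4)] Dinc_law[OF assms(2,3,4)] by simp
  also have "\<dots> = (\<integral>\<omega>. \<phi> (\<lambda>l\<in>{..<n}. Dinc Bt \<delta> l \<omega>) \<partial>Pt)"
    by (rule integral_distr[OF m2 phi])
  finally show ?thesis .
qed


context
  fixes P :: "'a measure" and B :: "real \<Rightarrow> 'a \<Rightarrow> real" and \<delta> :: real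
  assumes BM: "is_BM1 P B" and dpos: "\<delta> > 0"
begin

interpretation prob_space P using BM1_prob[OF BM] .

lemma Dinc_int: "integrable P (Dinc B \<delta> l)"
  using distributed_integrable_var[OF Dinc_distr[OF BM dpos, of l]] integrable_normal_moment_nz_1[of "sqrt \<delta>" 0] dpos
  by auto

lemma Dinc_mean: "(\<integral>\<omega>. Dinc B \<delta> l \<omega> \<partial>P) = 0"
  using normal_distributed_expectation[OF _ Dinc_distr[OF BM dpos, of l]] dpos by simp

lemma Dinc_sq_int: "integrable P (\<lambda>\<omega>. (Dinc B \<delta> l \<omega>)^2)"
proof -
  have "integrable lborel (\<lambda>x. normal_density 0 (sqrt \<delta>) x * x^2)"
    using integrable_normal_moment[of "sqrt \<delta>" 0 2] dpos by simp
  then show ?thesis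
    using distributed_integrable[OF Dinc_distr[OF BM dpos, of l], of "\<lambda>x. x^2"] by simp
qed

lemma Dinc_sq: "(\<integral>\<omega>. (Dinc B \<delta> l \<omega>)^2 \<partial>P) = \<delta>"
  using normal_distributed_variance[OF _ Dinc_distr[OF BM dpos, of l]] dpos Dinc_mean[of l]
  by simp

lemma Dinc_prod:
  assumes "l \<noteq> m"
  shows "integrable P (\<lambda>\<omega>. Dinc B \<delta> l \<omega> * Dinc B \<delta> m \<omega>)"
    "(\<integral>\<omega>. Dinc B \<delta> l \<omega> * Dinc B \<delta> m \<omega> \<partial>P) = 0"
proof -
  have ind: "indep_vars (\<lambda>_. borel) (Dinc B \<delta>) {l, m}"
    by (rule indep_vars_subset[OF Dinc_indep[OF BM dpos, of "Suc (max l m)"]]) auto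
  have pe: "\<And>\<omega>. (\<Prod>i\<in>{l,m}. Dinc B \<delta> i \<omega>) = Dinc B \<delta> l \<omega> * Dinc B \<delta> m \<omega>"
    using assms by simp
  show "integrable P (\<lambda>\<omega>. Dinc B \<delta> l \<omega> * Dinc B \<delta> m \<omega>)"
    using indep_vars_integrable[OF _ ind] Dinc_int pe by simp
  show "(\<integral>\<omega>. Dinc B \<delta> l \<omega> * Dinc B \<delta> m \<omega> \<partial>P) = 0"
    using indep_vars_lebesgue_integral[OF _ ind] Dinc_int pe Dinc_mean assms by simp
qed

lemma Dinc_prod_all:
  shows "integrable P (\<lambda>\<omega>. Dinc B \<delta> l \<omega> * Dinc B \<delta> m \<omega>)"
    "(\<integral>\<omega>. Dinc B \<delta> l \<omega> * Dinc B \<delta> m \<omega> \<partial>P) = (if l = m then \<delta> else 0)"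
  using Dinc_prod[of l m] Dinc_sq_int[of l] Dinc_sq[of l]
  by (auto simp: power2_eq_square)

lemma lin_comb_sq:
  fixes a :: "nat \<Rightarrow> real"
  shows "integrable P (\<lambda>\<omega>. (\<Sum>l<n. a l * Dinc B \<delta> l \<omega>)^2)"
    "(\<integral>\<omega>. (\<Sum>l<n. a l * Dinc B \<delta> l \<omega>)^2 \<partial>P) = \<delta> * (\<Sum>l<n. (a l)^2)"
proof -
  have eq: "\<And>\<omega>. (\<Sum>l<n. a l * Dinc B \<delta> l \<omega>)^2 = (\<Sum>l<n. \<Sum>m<n. a l * a m * (Dinc B \<delta> l \<omega> * Dinc B \<delta> m \<omega>))"
    by (simp add: power2_eq_square sum_product algebra_simps)
  show "integrable P (\<lambda>\<omega>. (\<Sum>l<n. a l * Dinc B \<delta> l \<omega>)^2)"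
    unfolding eq using Dinc_prod_all(1) by auto
  have "(\<integral>\<omega>. (\<Sum>l<n. a l * Dinc B \<delta> l \<omega>)^2 \<partial>P)
      = (\<Sum>l<n. \<Sum>m<n. a l * a m * (\<integral>\<omega>. Dinc B \<delta> l \<omega> * Dinc B \<delta> m \<omega> \<partial>P))"
    unfolding eq using Dinc_prod_all(1) by (simp add: Bochner_Integration.integral_sum)
  also have "\<dots> = (\<Sum>l<n. \<Sum>m<n. a l * a m * (if l = m then \<delta> else 0))"
    using Dinc_prod_all(2) by simp
  also have "\<dots> = \<delta> * (\<Sum>l<n. (a l)^2)"
    by (simp add: sum_distrib_left power2_eq_square if_distrib sum.delta algebra_simps cong: if_cong)
  finally show "(\<integral>\<omega>. (\<Sum>l<n. a l * Dinc B \<delta> l \<omega>)^2 \<partial>P) = \<delta> * (\<Sum>l<n. (a l)^2)" .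
qed

end


lemma integral_grid_split:
  fixes f :: "real \<Rightarrow> real" and h :: real
  assumes "continuous_on {0..real n * h} f" "h \<ge> 0"
  shows "integral {0..real n * h} f = (\<Sum>m<n. integral {real m * h..real (Suc m) * h} f)"
  using assms(1)
proof (induction n)
  case 0 then show ?case by simp
next
  case (Suc k)
  have c: "continuous_on {0..real k * h} f"
    by (rule continuous_on_subset[OF Suc.prems]) (use assms(2) in \<open>auto intro: mult_right_mono\<close>)
  have "integral {0..real (Suc k) * h} f = integral {0..real k * h} f + integral {real k * h..real (Suc k) * h} f"
  proof -
    have "f integrable_on {0..real (Suc k) * h}" by (rule integrable_continuous_interval[OF Suc.prems])
    moreover have "0 \<le> real k * h" "real k * h \<le> real (Suc k) * h" using assms(2) by (auto intro: mult_right_mono)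
    ultimately show ?thesis using Henstock_Kurzweil_Integration.integral_combine[where a=0 and c="real k * h" and b="real (Suc k) * h" and f=f] by simp
  qed
  then show ?case using Suc.IH[OF c] by simp
qed

lemma integral_approx_left:
  fixes f :: "real \<Rightarrow> real"
  assumes "continuous_on {a..b} f" "a \<le> b" "\<And>x. x \<in> {a..b} \<Longrightarrow> \<bar>f x - f a\<bar> \<le> e"
  shows "\<bar>integral {a..b} f - (b - a) * f a\<bar> \<le> (b - a) * e"
proof -
  have i: "f integrable_on {a..b}" by (rule integrable_continuous_interval[OF assms(1)])
  have "integral {a..b} f - (b - a) * f a = integral {a..b} (\<lambda>x. f x - f a)"
    using integral_diff[OF i integrable_const_ivl, of "f a"] assms(2) by simp
  also have "\<bar>\<dots>\<bar> \<le> integral {a..b} (\<lambda>x. e)"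
    using integral_norm_bound_integral[of "\<lambda>x. f x - f a" "{a..b}" "\<lambda>x. e"] i assms(3)
      integrable_diff[OF i integrable_const_ivl, of "f a"] integrable_const_ivl[of e a b]
    by auto
  also have "\<dots> = (b - a) * e" using assms(2) by simp
  finally show ?thesis .
qed

lemma riemann_left:
  fixes f :: "real \<Rightarrow> real"
  assumes cont: "continuous_on {0..T} f" and T: "T \<ge> 0"
  shows "(\<lambda>n. \<Sum>m<n. (T / real n) * f (real m * (T / real n))) \<longlonglongrightarrow> integral {0..T} f"
proof (rule LIMSEQ_I)
  fix r :: real assume r: "r > 0"
  define e where "e = r / (2 * (T + 1))"
  have e: "e > 0" using r T by (simp add: e_def)
  have uc: "uniformly_continuous_on {0..T} f"
    by (rule compact_uniformly_continuous[OF cont]) simp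
  then obtain d where d: "d > 0" "\<And>x y. x \<in> {0..T} \<Longrightarrow> y \<in> {0..T} \<Longrightarrow> dist y x < d \<Longrightarrow> dist (f y) (f x) < e"
    unfolding uniformly_continuous_on_def using e by metis
  obtain N :: nat where N: "N > T / d" using reals_Archimedean2 by blast
  show "\<exists>no. \<forall>n\<ge>no. norm ((\<Sum>m<n. (T / real n) * f (real m * (T / real n))) - integral {0..T} f) < r"
  proof (intro exI allI impI)
    fix n assume n: "n \<ge> Suc N"
    define h where "h = T / real n"
    have npos: "real n > 0" using n by simp
    have h0: "h \<ge> 0" using T npos by (simp add: h_def)
    have nh: "real n * h = T" using npos by (simp add: h_def)
    have hd: "h < d"
    proof -
      have "T / d < real n" using N n by linarith
      then have "T < real n * d" using d(1) by (simp add: divide_less_eq)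
      then show ?thesis unfolding h_def using npos by (simp add: divide_less_eq mult.commute)
    qed
    have split: "integral {0..T} f = (\<Sum>m<n. integral {real m * h..real (Suc m) * h} f)"
      using integral_grid_split[of n h f] cont nh h0 by simp
    have each: "\<bar>integral {real m * h..real (Suc m) * h} f - h * f (real m * h)\<bar> \<le> h * e" if m: "m < n" for m
    proof -
      have sub: "{real m * h..real (Suc m) * h} \<subseteq> {0..T}"
      proof -
        have "real (Suc m) * h \<le> real n * h" using m h0 by (intro mult_right_mono) auto
        then show ?thesis using h0 nh by auto
      qed
      have "\<bar>integral {real m * h..real (Suc m) * h} f - (real (Suc m) * h - real m * h) * f (real m * h)\<bar>
            \<le> (real (Suc m) * h - real m * h) * e"
      proof (rule integral_approx_left)
        show "continuous_on {real m * h..real (Suc m) * h} f" by (rule continuous_on_subset[OF cont sub])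
        show "real m * h \<le> real (Suc m) * h" using h0 by (intro mult_right_mono) auto
        fix x assume x: "x \<in> {real m * h..real (Suc m) * h}"
        have x0: "0 \<le> x"
        proof -
          have "0 \<le> real m * h" using h0 by simp
          moreover have "real m * h \<le> x" using x by simp
          ultimately show ?thesis by linarith
        qed
        have "x \<in> {0..T}" "real m * h \<in> {0..T}" using x sub h0 x0 by auto
        moreover have "dist x (real m * h) < d" using x hd by (auto simp: dist_real_def algebra_simps)
        ultimately have "dist (f x) (f (real m * h)) < e" using d(2) by blast
        then show "\<bar>f x - f (real m * h)\<bar> \<le> e" by (simp add: dist_real_def)
      qed
      moreover have "real (Suc m) * h - real m * h = h" by (simp add: algebra_simps)
      ultimately show ?thesis by simp
    qed
    have "\<bar>(\<Sum>m<n. h * f (real m * h)) - integral {0..T} f\<bar>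
        = \<bar>\<Sum>m<n. (h * f (real m * h) - integral {real m * h..real (Suc m) * h} f)\<bar>"
      unfolding split by (simp add: sum_subtractf)
    also have "\<dots> \<le> (\<Sum>m<n. \<bar>h * f (real m * h) - integral {real m * h..real (Suc m) * h} f\<bar>)"
      by (rule sum_abs)
    also have "\<dots> \<le> (\<Sum>m<n. h * e)"
      by (intro sum_mono) (use each in \<open>auto simp: abs_minus_commute\<close>)
    also have "\<dots> = T * e" using nh by (simp add: algebra_simps)
    also have "\<dots> < r"
    proof -
      have "T * e = r * (T / (2 * (T + 1)))" unfolding e_def by (simp add: field_simps)
      also have "\<dots> < r * 1" using r T by (intro mult_strict_left_mono) (auto simp: field_simps)
      finally show ?thesis by simp
    qed
    finally show "norm ((\<Sum>m<n. (T / real n) * f (real m * (T / real n))) - integral {0..T} f) < r"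
      unfolding h_def[symmetric] by (simp add: mult.commute)
  qed
qed


lemma ode_solution:
  fixes Vf Wf :: "real \<Rightarrow> real" and \<gamma> c v0 T :: real
  assumes g: "\<gamma> > 0" and cV: "continuous_on {0..T} Vf" and cW: "continuous_on {0..T} Wf"
    and eq: "\<And>t. 0 \<le> t \<Longrightarrow> t \<le> T \<Longrightarrow> Vf t = v0 - \<gamma> * integral {0..t} Vf + c * Wf t"
    and T: "T \<ge> 0"
  shows "Vf T = exp (-\<gamma> * T) * v0 + c * (Wf T - \<gamma> * exp (-\<gamma> * T) * integral {0..T} (\<lambda>s. exp (\<gamma> * s) * Wf s))"
proof -
  define Y where "Y u = integral {0..u} Vf" for u
  have dY: "(Y has_real_derivative Vf x) (at x within {0..T})" if "x \<in> {0..T}" for x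
    using integral_has_vector_derivative[OF cV that] unfolding Y_def
    by (simp add: has_real_derivative_iff_has_vector_derivative)
  define H where "H u = exp (\<gamma> * u) * Y u" for u
  have dH: "(H has_vector_derivative (exp (\<gamma> * x) * (v0 + c * Wf x))) (at x within {0..T})" if x: "x \<in> {0..T}" for x
  proof -
    have "(H has_real_derivative (exp (\<gamma> * x) * \<gamma> * Y x + exp (\<gamma> * x) * Vf x)) (at x within {0..T})"
      unfolding H_def
      by (rule derivative_eq_intros dY[OF x] | simp)+
    moreover have "exp (\<gamma> * x) * \<gamma> * Y x + exp (\<gamma> * x) * Vf x = exp (\<gamma> * x) * (v0 + c * Wf x)"
    proof -
      have "Vf x + \<gamma> * Y x = v0 + c * Wf x" using eq[of x] x unfolding Y_def by simp
      moreover have "exp (\<gamma> * x) * \<gamma> * Y x + exp (\<gamma> * x) * Vf x = exp (\<gamma> * x) * (Vf x + \<gamma> * Y x)"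
        by (simp add: algebra_simps)
      ultimately show ?thesis by simp
    qed
    ultimately show ?thesis by (simp add: has_real_derivative_iff_has_vector_derivative)
  qed
  have I1: "((\<lambda>x. exp (\<gamma> * x) * (v0 + c * Wf x)) has_integral (H T - H 0)) {0..T}"
    by (rule fundamental_theorem_of_calculus[OF T dH])
  have H0: "H 0 = 0" by (simp add: H_def Y_def)
  define E where "E u = exp (\<gamma> * u) / \<gamma>" for u
  have dE: "(E has_vector_derivative exp (\<gamma> * x)) (at x within {0..T})" for x
  proof -
    have "((\<lambda>u. exp (\<gamma> * u)) has_real_derivative (exp (\<gamma> * x) * \<gamma>)) (at x within {0..T})"
      by (rule derivative_eq_intros | simp)+
    then have "(E has_real_derivative (exp (\<gamma> * x) * \<gamma> / \<gamma>)) (at x within {0..T})"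
      unfolding E_def[abs_def] by (rule DERIV_cdivide)
    then show ?thesis using g by (simp add: has_real_derivative_iff_has_vector_derivative)
  qed
  have I2: "((\<lambda>x. exp (\<gamma> * x)) has_integral (E T - E 0)) {0..T}"
    by (rule fundamental_theorem_of_calculus[OF T dE])
  have cEW: "continuous_on {0..T} (\<lambda>s. exp (\<gamma> * s) * Wf s)"
    by (intro continuous_intros cW)
  have I3: "((\<lambda>s. exp (\<gamma> * s) * Wf s) has_integral integral {0..T} (\<lambda>s. exp (\<gamma> * s) * Wf s)) {0..T}"
    using integrable_continuous_interval[OF cEW] by (simp add: has_integral_integral)
  have I4: "((\<lambda>x. v0 * exp (\<gamma> * x) + c * (exp (\<gamma> * x) * Wf x)) has_integral
             (v0 * (E T - E 0) + c * integral {0..T} (\<lambda>s. exp (\<gamma> * s) * Wf s))) {0..T}"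
    by (intro has_integral_add has_integral_mult_right I2 I3)
  have "H T - H 0 = v0 * (E T - E 0) + c * integral {0..T} (\<lambda>s. exp (\<gamma> * s) * Wf s)"
    by (rule has_integral_unique[OF I1]) (use I4 in \<open>simp add: algebra_simps\<close>)
  then have HT: "exp (\<gamma> * T) * Y T = v0 * (exp (\<gamma> * T) - 1) / \<gamma> + c * integral {0..T} (\<lambda>s. exp (\<gamma> * s) * Wf s)"
    using H0 g by (simp add: H_def E_def field_simps)
  have YT: "Y T = exp (-\<gamma> * T) * (v0 * (exp (\<gamma> * T) - 1) / \<gamma> + c * integral {0..T} (\<lambda>s. exp (\<gamma> * s) * Wf s))"
    using HT by (simp add: exp_minus field_simps)
  have "Vf T = v0 - \<gamma> * Y T + c * Wf T" using eq[of T] T unfolding Y_def by simp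
  also have "\<dots> = exp (-\<gamma> * T) * v0 + c * (Wf T - \<gamma> * exp (-\<gamma> * T) * integral {0..T} (\<lambda>s. exp (\<gamma> * s) * Wf s))"
    unfolding YT using g by (simp add: field_simps exp_minus)
  finally show ?thesis .
qed


lemma sG_isCont: "isCont sG x"
  using sG_cont continuous_on_eq_continuous_at[of UNIV sG] by auto

lemma limit_argument:
  fixes B :: "real \<Rightarrow> 'a \<Rightarrow> real" and Bt :: "real \<Rightarrow> 'b \<Rightarrow> real" and a :: "nat \<Rightarrow> nat \<Rightarrow> real"
    and SP :: "'a \<Rightarrow> real" and St :: "'b \<Rightarrow> real"
  assumes BM: "is_BM1 P B" and BMt: "is_BM1 Pt Bt"
    and h: "h > 0" and k: "k > 0"
    and SP: "SP \<in> borel_measurable P" and St: "St \<in> borel_measurable Pt"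
    and limP: "AE \<omega> in P. (\<lambda>r. \<Sum>l<k*r. a r l * Dinc B (h / real r) l \<omega>) \<longlonglongrightarrow> SP \<omega> - m"
    and limPt: "AE \<omega> in Pt. (\<lambda>r. \<Sum>l<k*r. a r l * Dinc Bt (h / real r) l \<omega>) \<longlonglongrightarrow> St \<omega> - mt"
    and var: "eventually (\<lambda>r. (h / real r) * (\<Sum>l<k*r. (a r l)^2) \<le> \<sigma>^2) sequentially"
    and sig: "\<sigma> > 0" and mm: "m \<noteq> mt"
  shows "(10/81) * (\<bar>m - mt\<bar> / (\<sigma> + \<bar>m - mt\<bar>)) \<le>
     \<bar>(\<integral>\<omega>. sG ((SP \<omega> - (m + mt)/2) / (\<sigma> + \<bar>m - mt\<bar>)) \<partial>P) - (\<integral>\<omega>. sG ((St \<omega> - (m + mt)/2) / (\<sigma> + \<bar>m - mt\<bar>)) \<partial>Pt)\<bar>"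
proof -
  define \<Delta> where "\<Delta> = \<bar>m - mt\<bar>"
  define mid where "mid = (m + mt)/2"
  define s where "s = \<sigma> + \<Delta>"
  have Dp: "\<Delta> > 0" using mm by (simp add: \<Delta>_def)
  have sp: "s > 0" using Dp sig by (simp add: s_def)
  interpret P: prob_space P using BM1_prob[OF BM] .
  interpret Pt: prob_space Pt using BM1_prob[OF BMt] .
  define N where "N r \<omega> = (\<Sum>l<k*r. a r l * Dinc B (h / real r) l \<omega>)" for r \<omega>
  define Nt where "Nt r \<omega> = (\<Sum>l<k*r. a r l * Dinc Bt (h / real r) l \<omega>)" for r \<omega>
  have Nm[measurable]: "N r \<in> borel_measurable P" for r
    unfolding N_def using Dinc_meas[OF BM] h by (auto intro!: borel_measurable_sum borel_measurable_times)
  have Ntm[measurable]: "Nt r \<in> borel_measurable Pt" for r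
    unfolding Nt_def using Dinc_meas[OF BMt] h by (auto intro!: borel_measurable_sum borel_measurable_times)
  define f1 where "f1 r = (\<integral>\<omega>. sG ((m - mid + N r \<omega>) / s) \<partial>P)" for r
  define f2 where "f2 r = (\<integral>\<omega>. sG ((mt - mid + N r \<omega>) / s) \<partial>P)" for r
  define f2' where "f2' r = (\<integral>\<omega>. sG ((mt - mid + Nt r \<omega>) / s) \<partial>Pt)" for r
  have L1: "f1 \<longlonglongrightarrow> (\<integral>\<omega>. sG ((SP \<omega> - mid) / s) \<partial>P)"
    unfolding f1_def
  proof (rule integral_dominated_convergence[where w="\<lambda>_. 1"])
    show "(\<lambda>\<omega>. sG ((SP \<omega> - mid) / s)) \<in> borel_measurable P" using SP by measurable
    show "(\<lambda>\<omega>. sG ((m - mid + N r \<omega>) / s)) \<in> borel_measurable P" for r by measurable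
    show "integrable P (\<lambda>_. 1::real)" by simp
    show "AE \<omega> in P. norm (sG ((m - mid + N r \<omega>) / s)) \<le> 1" for r using sG_bound by simp
    show "AE \<omega> in P. (\<lambda>r. sG ((m - mid + N r \<omega>) / s)) \<longlonglongrightarrow> sG ((SP \<omega> - mid) / s)"
      using limP
    proof eventually_elim
      case (elim \<omega>)
      then have "(\<lambda>r. (m - mid + N r \<omega>) / s) \<longlonglongrightarrow> (m - mid + (SP \<omega> - m)) / s"
        unfolding N_def using sp by (intro tendsto_intros) auto
      then show ?case by (intro isCont_tendsto_compose[OF sG_isCont]) simp
    qed
  qed
  have L2: "f2' \<longlonglongrightarrow> (\<integral>\<omega>. sG ((St \<omega> - mid) / s) \<partial>Pt)"
    unfolding f2'_def
  proof (rule integral_dominated_convergence[where w="\<lambda>_. 1"])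
    show "(\<lambda>\<omega>. sG ((St \<omega> - mid) / s)) \<in> borel_measurable Pt" using St by measurable
    show "(\<lambda>\<omega>. sG ((mt - mid + Nt r \<omega>) / s)) \<in> borel_measurable Pt" for r by measurable
    show "integrable Pt (\<lambda>_. 1::real)" by simp
    show "AE \<omega> in Pt. norm (sG ((mt - mid + Nt r \<omega>) / s)) \<le> 1" for r using sG_bound by simp
    show "AE \<omega> in Pt. (\<lambda>r. sG ((mt - mid + Nt r \<omega>) / s)) \<longlonglongrightarrow> sG ((St \<omega> - mid) / s)"
      using limPt
    proof eventually_elim
      case (elim \<omega>)
      then have "(\<lambda>r. (mt - mid + Nt r \<omega>) / s) \<longlonglongrightarrow> (mt - mid + (St \<omega> - mt)) / s"
        unfolding Nt_def using sp by (intro tendsto_intros) auto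
      then show ?case by (intro isCont_tendsto_compose[OF sG_isCont]) simp
    qed
  qed
  have eq2: "f2' r = f2 r" if r: "r > 0" for r
  proof -
    have dp: "h / real r > 0" using h r by simp
    have np: "k * r > 0" using k r by simp
    define \<phi> where "\<phi> x = sG ((mt - mid + (\<Sum>l<k*r. a r l * x l)) / s)" for x :: "nat \<Rightarrow> real"
    have \<phi>m: "\<phi> \<in> borel_measurable (Pi\<^sub>M {..<k*r} (\<lambda>_. borel))"
      unfolding \<phi>_def by measurable
    have "(\<integral>\<omega>. \<phi> (\<lambda>l\<in>{..<k*r}. Dinc B (h / real r) l \<omega>) \<partial>P) = (\<integral>\<omega>. \<phi> (\<lambda>l\<in>{..<k*r}. Dinc Bt (h / real r) l \<omega>) \<partial>Pt)"
      by (rule Dinc_law_eq[OF BM BMt dp np \<phi>m])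
    then show ?thesis unfolding f2_def f2'_def \<phi>_def N_def Nt_def by simp
  qed
  have bnd: "(10/81) * (\<Delta>/s) \<le> \<bar>f1 r - f2 r\<bar>"
    if r: "r > 0" and vr: "(h / real r) * (\<Sum>l<k*r. (a r l)^2) \<le> \<sigma>^2" for r
  proof -
    have dp: "h / real r > 0" using h r by simp
    have sq: "integrable P (\<lambda>\<omega>. (N r \<omega>)^2)" "(\<integral>\<omega>. (N r \<omega>)^2 \<partial>P) \<le> \<sigma>^2"
      using lin_comb_sq[OF BM dp, of "a r" "k*r"] vr unfolding N_def by auto
    have E: "(10/81) * (\<Delta>/s) \<le> (\<integral>\<omega>. sG ((\<Delta>/2 + N r \<omega>)/s) \<partial>P) - (\<integral>\<omega>. sG ((-\<Delta>/2 + N r \<omega>)/s) \<partial>P)"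
      by (rule sG_expect[OF P.prob_space_axioms Nm sq sig Dp s_def])
    show ?thesis
    proof (cases "m > mt")
      case True
      then have e1: "m - mid = \<Delta>/2" and e2: "mt - mid = -\<Delta>/2" by (auto simp: \<Delta>_def mid_def field_simps)
      show ?thesis using E unfolding f1_def f2_def e1 e2 by simp
    next
      case False
      then have e1: "m - mid = -\<Delta>/2" and e2: "mt - mid = \<Delta>/2" using mm by (auto simp: \<Delta>_def mid_def field_simps)
      show ?thesis using E unfolding f1_def f2_def e1 e2 by simp
    qed
  qed
  have lim: "(\<lambda>r. \<bar>f1 r - f2' r\<bar>) \<longlonglongrightarrow> \<bar>(\<integral>\<omega>. sG ((SP \<omega> - mid) / s) \<partial>P) - (\<integral>\<omega>. sG ((St \<omega> - mid) / s) \<partial>Pt)\<bar>"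
    by (intro tendsto_intros L1 L2)
  obtain R where R: "\<And>r. r \<ge> R \<Longrightarrow> (h / real r) * (\<Sum>l<k*r. (a r l)^2) \<le> \<sigma>^2"
    using var unfolding eventually_sequentially by blast
  have "(10/81) * (\<Delta>/s) \<le> \<bar>(\<integral>\<omega>. sG ((SP \<omega> - mid) / s) \<partial>P) - (\<integral>\<omega>. sG ((St \<omega> - mid) / s) \<partial>Pt)\<bar>"
  proof (rule LIMSEQ_le_const[OF lim], intro exI allI impI)
    fix r assume "r \<ge> Suc R"
    then have "r > 0" "r \<ge> R" by auto
    then show "(10/81) * (\<Delta>/s) \<le> \<bar>f1 r - f2' r\<bar>" using bnd[of r] R[of r] eq2[of r] by simp
  qed
  then show ?thesis unfolding \<Delta>_def mid_def s_def .
qed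


definition Dp :: "(real \<Rightarrow> real) \<Rightarrow> real \<Rightarrow> nat \<Rightarrow> real" where
  "Dp w \<delta> l = w (real (Suc l) * \<delta>) - w (real l * \<delta>)"

definition coefS :: "real \<Rightarrow> real \<Rightarrow> real \<Rightarrow> real \<Rightarrow> nat \<Rightarrow> nat \<Rightarrow> nat \<Rightarrow> real" where
  "coefS \<gamma> c b h k r l = c * (1 - \<gamma> * exp (-\<gamma> * (real k * h)) *
      (\<Sum>m\<in>{Suc l..<k*r}. (h / real r) * exp (\<gamma> * (real m * (h / real r))))
      - b * exp (-\<gamma> * (real k * h - real (Suc (l div r)) * h)))"

lemma sum_swap_tri:
  fixes e D :: "nat \<Rightarrow> real"
  shows "(\<Sum>m<n. e m * (\<Sum>l<m. D l)) = (\<Sum>l<n. (\<Sum>m\<in>{Suc l..<n}. e m) * D l)"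
proof (induction n)
  case 0 then show ?case by simp
next
  case (Suc n)
  have "(\<Sum>l<Suc n. (\<Sum>m\<in>{Suc l..<Suc n}. e m) * D l) = (\<Sum>l<n. (\<Sum>m\<in>{Suc l..<Suc n}. e m) * D l)"
    by simp
  also have "\<dots> = (\<Sum>l<n. (\<Sum>m\<in>{Suc l..<n}. e m) * D l + e n * D l)"
    by (intro sum.cong refl) (simp add: algebra_simps)
  also have "\<dots> = (\<Sum>l<n. (\<Sum>m\<in>{Suc l..<n}. e m) * D l) + e n * (\<Sum>l<n. D l)"
    by (simp add: sum.distrib sum_distrib_left)
  finally show ?case using Suc.IH by simp
qed

lemma sum_Dp_tele:
  assumes "m \<le> n"
  shows "(\<Sum>l\<in>{m..<n}. Dp w \<delta> l) = w (real n * \<delta>) - w (real m * \<delta>)"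
  unfolding Dp_def using sum_Suc_diff'[OF assms, of "\<lambda>l. w (real l * \<delta>)"] by simp

lemma stat_alg:
  fixes w :: "real \<Rightarrow> real"
  assumes w0: "w 0 = 0" and r: "r > 0"
  shows "(\<Sum>l<k*r. coefS \<gamma> c b h k r l * Dp w (h / real r) l)
    = c * (w (real k * h) - \<gamma> * exp (-\<gamma> * (real k * h)) *
          (\<Sum>m<k*r. (h / real r) * exp (\<gamma> * (real m * (h / real r))) * w (real m * (h / real r)))
       - b * (\<Sum>j<k. exp (-\<gamma> * (real k * h - real (Suc j) * h)) * (w (real (Suc j) * h) - w (real j * h))))"
proof -
  define \<delta> where "\<delta> = h / real r"
  define n where "n = k * r"
  define e where "e m = \<delta> * exp (\<gamma> * (real m * \<delta>))" for m
  define E where "E j = exp (-\<gamma> * (real k * h - real (Suc j) * h))" for j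
  have nd: "real n * \<delta> = real k * h" using r by (simp add: n_def \<delta>_def)
  have a: "(\<Sum>l<n. Dp w \<delta> l) = w (real k * h)"
    using sum_Dp_tele[of 0 n w \<delta>] nd w0 by (simp add: atLeast0LessThan)
  have b: "(\<Sum>l<n. (\<Sum>m\<in>{Suc l..<n}. e m) * Dp w \<delta> l) = (\<Sum>m<n. e m * w (real m * \<delta>))"
  proof -
    have "(\<Sum>l<n. (\<Sum>m\<in>{Suc l..<n}. e m) * Dp w \<delta> l) = (\<Sum>m<n. e m * (\<Sum>l<m. Dp w \<delta> l))"
      by (rule sum_swap_tri[symmetric])
    also have "\<dots> = (\<Sum>m<n. e m * w (real m * \<delta>))"
      using sum_Dp_tele[of 0 _ w \<delta>] w0 by (simp add: atLeast0LessThan)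
    finally show ?thesis .
  qed
  have c: "(\<Sum>l<n. E (l div r) * Dp w \<delta> l) = (\<Sum>j<k. E j * (w (real (Suc j) * h) - w (real j * h)))"
  proof -
    have "(\<Sum>l<n. E (l div r) * Dp w \<delta> l) = (\<Sum>j<k. \<Sum>l\<in>{j*r..<j*r+r}. E (l div r) * Dp w \<delta> l)"
      unfolding n_def by (rule sum.nat_group[symmetric])
    also have "\<dots> = (\<Sum>j<k. \<Sum>l\<in>{j*r..<j*r+r}. E j * Dp w \<delta> l)"
    proof (intro sum.cong refl)
      fix j l assume "l \<in> {j*r..<j*r+r}"
      then have "l div r = j" using r by (auto simp: div_nat_eqI mult.commute)
      then show "E (l div r) * Dp w \<delta> l = E j * Dp w \<delta> l" by simp
    qed
    also have "\<dots> = (\<Sum>j<k. E j * (w (real (Suc j) * h) - w (real j * h)))"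
    proof (intro sum.cong refl)
      fix j
      have e1: "real (j*r+r) * \<delta> = real (Suc j) * h" and e2: "real (j*r) * \<delta> = real j * h"
        using r by (simp_all add: \<delta>_def field_simps)
      have "(\<Sum>l\<in>{j*r..<j*r+r}. Dp w \<delta> l) = w (real (Suc j) * h) - w (real j * h)"
        using sum_Dp_tele[of "j*r" "j*r+r" w \<delta>] unfolding e1 e2 by simp
      then show "(\<Sum>l\<in>{j*r..<j*r+r}. E j * Dp w \<delta> l) = E j * (w (real (Suc j) * h) - w (real j * h))"
        by (simp add: sum_distrib_left[symmetric])
    qed
    finally show ?thesis .
  qed
  have "(\<Sum>l<n. coefS \<gamma> c b h k r l * Dp w \<delta> l)
      = c * ((\<Sum>l<n. Dp w \<delta> l) - \<gamma> * exp (-\<gamma> * (real k * h)) * (\<Sum>l<n. (\<Sum>m\<in>{Suc l..<n}. e m) * Dp w \<delta> l)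
             - b * (\<Sum>l<n. E (l div r) * Dp w \<delta> l))"
    unfolding coefS_def e_def E_def \<delta>_def n_def
    by (simp add: algebra_simps sum_distrib_left sum_subtractf sum.distrib)
  also have "\<dots> = c * (w (real k * h) - \<gamma> * exp (-\<gamma> * (real k * h)) * (\<Sum>m<n. e m * w (real m * \<delta>))
             - b * (\<Sum>j<k. E j * (w (real (Suc j) * h) - w (real j * h))))"
    unfolding a b c ..
  finally show ?thesis unfolding e_def E_def \<delta>_def n_def by (simp add: mult.assoc)
qed

lemma stat_limit:
  fixes w :: "real \<Rightarrow> real"
  assumes w0: "w 0 = 0" and cont: "continuous_on {0..real k * h} w" and k: "k > 0" and h: "h > 0"
  shows "(\<lambda>r. \<Sum>l<k*r. coefS \<gamma> c b h k r l * Dp w (h / real r) l) \<longlonglongrightarrow>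
     c * (w (real k * h) - \<gamma> * exp (-\<gamma> * (real k * h)) * integral {0..real k * h} (\<lambda>s. exp (\<gamma> * s) * w s)
       - b * (\<Sum>j<k. exp (-\<gamma> * (real k * h - real (Suc j) * h)) * (w (real (Suc j) * h) - w (real j * h))))"
proof -
  define T where "T = real k * h"
  define f where "f s = exp (\<gamma> * s) * w s" for s
  have T0: "T \<ge> 0" using h by (simp add: T_def)
  have cf: "continuous_on {0..T} f" unfolding f_def T_def by (intro continuous_intros cont)
  have R: "(\<lambda>n. \<Sum>m<n. (T / real n) * f (real m * (T / real n))) \<longlonglongrightarrow> integral {0..T} f"
    by (rule riemann_left[OF cf T0])
  have sm: "strict_mono (\<lambda>r. k * r)" using k by (auto simp: strict_mono_def)
  have R2: "(\<lambda>r. \<Sum>m<k*r. (T / real (k*r)) * f (real m * (T / real (k*r)))) \<longlonglongrightarrow> integral {0..T} f"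
    using LIMSEQ_subseq_LIMSEQ[OF R sm] by (simp add: comp_def)
  have R3: "(\<lambda>r. c * (w T - \<gamma> * exp (-\<gamma> * T) * (\<Sum>m<k*r. (T / real (k*r)) * f (real m * (T / real (k*r))))
       - b * (\<Sum>j<k. exp (-\<gamma> * (T - real (Suc j) * h)) * (w (real (Suc j) * h) - w (real j * h)))))
      \<longlonglongrightarrow> c * (w T - \<gamma> * exp (-\<gamma> * T) * integral {0..T} f
       - b * (\<Sum>j<k. exp (-\<gamma> * (T - real (Suc j) * h)) * (w (real (Suc j) * h) - w (real j * h))))"
    by (intro tendsto_intros R2)
  have ev: "eventually (\<lambda>r. c * (w T - \<gamma> * exp (-\<gamma> * T) * (\<Sum>m<k*r. (T / real (k*r)) * f (real m * (T / real (k*r))))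
       - b * (\<Sum>j<k. exp (-\<gamma> * (T - real (Suc j) * h)) * (w (real (Suc j) * h) - w (real j * h))))
      = (\<Sum>l<k*r. coefS \<gamma> c b h k r l * Dp w (h / real r) l)) sequentially"
    unfolding eventually_sequentially
  proof (intro exI allI impI)
    fix r :: nat assume "r \<ge> 1"
    then have r: "r > 0" by simp
    have Td: "T / real (k*r) = h / real r" using k r by (simp add: T_def)
    show "c * (w T - \<gamma> * exp (-\<gamma> * T) * (\<Sum>m<k*r. (T / real (k*r)) * f (real m * (T / real (k*r))))
       - b * (\<Sum>j<k. exp (-\<gamma> * (T - real (Suc j) * h)) * (w (real (Suc j) * h) - w (real j * h))))
      = (\<Sum>l<k*r. coefS \<gamma> c b h k r l * Dp w (h / real r) l)"
      unfolding stat_alg[where w=w and r=r and k=k and h=h and \<gamma>=\<gamma> and c=c and b=b, OF w0 r] Td unfolding T_def f_def by (simp add: mult.assoc)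
  qed
  show ?thesis using Lim_transform_eventually[OF R3 ev] unfolding T_def f_def .
qed


lemma one_minus_exp_le: "x \<ge> 0 \<Longrightarrow> 1 - exp (-x) \<le> (x::real)"
  using exp_ge_add_one_self[of "-x"] by simp

lemma one_minus_exp_ge: "x > 0 \<Longrightarrow> x / (1 + x) \<le> 1 - exp (-(x::real))"
proof -
  assume x: "x > 0"
  have "1 + x \<le> exp x" by (rule exp_ge_add_one_self)
  then have "exp (-x) \<le> 1 / (1 + x)" using x by (simp add: exp_minus divide_simps)
  moreover have "1 - 1 / (1 + x) = x / (1 + x)" using x by (simp add: field_simps)
  ultimately show ?thesis by linarith
qed

lemma geom_exp_bound:
  fixes a :: real assumes a: "a > 0"
  shows "(\<Sum>i<n. exp (-a * real i)) \<le> (1 + a) / a"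
proof -
  have q: "0 < exp (-a)" "exp (-a) < 1" using a by auto
  have "(\<Sum>i<n. exp (-a * real i)) = (\<Sum>i<n. exp (-a) ^ i)"
    by (simp add: exp_of_nat_mult[symmetric] mult.commute)
  also have "\<dots> < 1 / (1 - exp (-a))" by (rule geometric_sum_less[OF q]) simp
  also have "\<dots> \<le> 1 / (a / (1 + a))"
    using one_minus_exp_ge[OF a] a by (intro divide_left_mono) auto
  also have "\<dots> = (1 + a) / a" by simp
  finally show ?thesis by simp
qed

lemma A_bounds:
  fixes \<gamma> \<delta> T :: real
  assumes g: "\<gamma> > 0" and d: "\<delta> > 0" and l: "l < n" and T: "T = real n * \<delta>"
  defines "A \<equiv> \<gamma> * exp (-\<gamma> * T) * (\<Sum>m\<in>{Suc l..<n}. \<delta> * exp (\<gamma> * (real m * \<delta>)))"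
  defines "u \<equiv> exp (-\<gamma> * (T - real (Suc l) * \<delta>))"
  shows "exp (-\<gamma> * \<delta>) * (1 - u) \<le> A" "A \<le> 1 - u"
proof -
  define g' where "g' m = exp (\<gamma> * (real m * \<delta>))" for m
  have tel: "(\<Sum>m\<in>{Suc l..<n}. g' (Suc m) - g' m) = g' n - g' (Suc l)"
    by (rule sum_Suc_diff') (use l in simp)
  have up: "\<gamma> * (\<delta> * g' m) \<le> g' (Suc m) - g' m" for m
  proof -
    have e1: "g' (Suc m) = g' m * exp (\<gamma> * \<delta>)" by (simp add: g'_def exp_add[symmetric] algebra_simps)
    have e2: "\<gamma> * \<delta> \<le> exp (\<gamma> * \<delta>) - 1" using exp_ge_add_one_self[of "\<gamma> * \<delta>"] by linarith
    have e3: "g' m > 0" by (simp add: g'_def)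
    have "g' m * (\<gamma> * \<delta>) \<le> g' m * (exp (\<gamma> * \<delta>) - 1)"
      using e2 e3 by (intro mult_left_mono) auto
    moreover have "g' (Suc m) - g' m = g' m * (exp (\<gamma> * \<delta>) - 1)" using e1 by (simp add: algebra_simps)
    ultimately show ?thesis by (simp add: algebra_simps)
  qed
  have lo: "exp (-\<gamma> * \<delta>) * (g' (Suc m) - g' m) \<le> \<gamma> * (\<delta> * g' m)" for m
  proof -
    have "exp (-\<gamma> * \<delta>) * (g' (Suc m) - g' m) = g' m * (1 - exp (-(\<gamma> * \<delta>)))"
      by (simp add: g'_def algebra_simps exp_add[symmetric])
    also have "\<dots> \<le> g' m * (\<gamma> * \<delta>)"
      using one_minus_exp_le[of "\<gamma> * \<delta>"] g d by (intro mult_left_mono) (auto simp: g'_def)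
    finally show ?thesis by (simp add: algebra_simps)
  qed
  have A_eq: "A = exp (-\<gamma> * T) * (\<Sum>m\<in>{Suc l..<n}. \<gamma> * (\<delta> * g' m))"
    unfolding A_def g'_def by (simp add: sum_distrib_left algebra_simps)
  have G: "exp (-\<gamma> * T) * (g' n - g' (Suc l)) = 1 - u"
    unfolding g'_def u_def T by (simp add: algebra_simps exp_add[symmetric] exp_diff)
  have "A \<le> exp (-\<gamma> * T) * (\<Sum>m\<in>{Suc l..<n}. g' (Suc m) - g' m)"
    unfolding A_eq by (intro mult_left_mono sum_mono up) auto
  then show "A \<le> 1 - u" using tel G by simp
  have "exp (-\<gamma> * \<delta>) * (1 - u) = exp (-\<gamma> * T) * (\<Sum>m\<in>{Suc l..<n}. exp (-\<gamma> * \<delta>) * (g' (Suc m) - g' m))"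
  proof -
    have "exp (-\<gamma> * \<delta>) * (1 - u) = exp (-\<gamma> * \<delta>) * (exp (-\<gamma> * T) * (\<Sum>m\<in>{Suc l..<n}. g' (Suc m) - g' m))"
      using tel G by simp
    also have "\<dots> = exp (-\<gamma> * T) * (\<Sum>m\<in>{Suc l..<n}. exp (-\<gamma> * \<delta>) * (g' (Suc m) - g' m))"
      by (simp only: sum_distrib_left mult.left_commute)
    finally show ?thesis .
  qed
  also have "\<dots> \<le> A"
    unfolding A_eq by (intro mult_left_mono sum_mono lo) auto
  finally show "exp (-\<gamma> * \<delta>) * (1 - u) \<le> A" .
qed


lemma coef_cases:
  fixes \<gamma> h c :: real
  assumes g: "\<gamma> > 0" and h: "h > 0" and r: "r > 0" and l: "l < k * r"
  defines "\<delta> \<equiv> h / real r"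
  defines "u \<equiv> exp (-\<gamma> * (real k * h - real (Suc l) * \<delta>))"
  defines "A \<equiv> \<gamma> * exp (-\<gamma> * (real k * h)) * (\<Sum>m\<in>{Suc l..<k*r}. \<delta> * exp (\<gamma> * (real m * \<delta>)))"
  shows "coefS \<gamma> c b h k r l = c * (1 - A - b * exp (-\<gamma> * (real k * h - real (Suc (l div r)) * h)))"
    "u \<le> 1 - A" "1 - A \<le> \<gamma> * \<delta> + u" "0 \<le> u"
proof -
  have d: "\<delta> > 0" using h r by (simp add: \<delta>_def)
  have T: "real k * h = real (k*r) * \<delta>" using r by (simp add: \<delta>_def)
  note AB = A_bounds[OF g d l T]
  show "coefS \<gamma> c b h k r l = c * (1 - A - b * exp (-\<gamma> * (real k * h - real (Suc (l div r)) * h)))"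
    unfolding coefS_def A_def \<delta>_def ..
  show "u \<le> 1 - A" using AB(2) unfolding A_def u_def by simp
  have "1 - A \<le> 1 - exp (-\<gamma> * \<delta>) * (1 - u)" using AB(1) unfolding A_def u_def by simp
  also have "\<dots> = (1 - exp (-(\<gamma> * \<delta>))) + exp (-\<gamma> * \<delta>) * u" by (simp add: algebra_simps)
  also have "\<dots> \<le> \<gamma> * \<delta> + 1 * u"
  proof (intro add_mono mult_right_mono)
    show "1 - exp (-(\<gamma> * \<delta>)) \<le> \<gamma> * \<delta>" using g d by (intro one_minus_exp_le) simp
    show "exp (-\<gamma> * \<delta>) \<le> 1" using g d by simp
    show "0 \<le> u" by (simp add: u_def)
  qed
  finally show "1 - A \<le> \<gamma> * \<delta> + u" by simp
  show "0 \<le> u" by (simp add: u_def)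
qed

lemma sum_u_sq:
  fixes \<gamma> \<delta> :: real
  assumes g: "\<gamma> > 0" and d: "\<delta> > 0"
  shows "\<delta> * (\<Sum>l<n. (exp (-\<gamma> * (real n * \<delta> - real (Suc l) * \<delta>)))^2) \<le> (1 + 2*\<gamma>*\<delta>) / (2*\<gamma>)"
proof -
  have "(\<Sum>l<n. (exp (-\<gamma> * (real n * \<delta> - real (Suc l) * \<delta>)))^2) = (\<Sum>l<n. exp (-(2*\<gamma>*\<delta>) * real (n - Suc l)))"
  proof (intro sum.cong refl)
    fix l assume "l \<in> {..<n}"
    then have "real (n - Suc l) = real n - real (Suc l)" by (simp add: of_nat_diff)
    then show "(exp (-\<gamma> * (real n * \<delta> - real (Suc l) * \<delta>)))^2 = exp (-(2*\<gamma>*\<delta>) * real (n - Suc l))"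
      by (simp add: exp_double[symmetric] power2_eq_square exp_add[symmetric] algebra_simps)
  qed
  also have "\<dots> = (\<Sum>i<n. exp (-(2*\<gamma>*\<delta>) * real i))"
    by (rule sum.nat_diff_reindex)
  also have "\<dots> \<le> (1 + 2*\<gamma>*\<delta>) / (2*\<gamma>*\<delta>)"
    by (rule geom_exp_bound) (use g d in simp)
  finally have "\<delta> * (\<Sum>l<n. (exp (-\<gamma> * (real n * \<delta> - real (Suc l) * \<delta>)))^2) \<le> \<delta> * ((1 + 2*\<gamma>*\<delta>) / (2*\<gamma>*\<delta>))"
    using d by (intro mult_left_mono) auto
  also have "\<dots> = (1 + 2*\<gamma>*\<delta>) / (2*\<gamma>)" using d g by (simp add: field_simps)
  finally show ?thesis .
qed

lemma var_b0:
  fixes \<gamma> h c :: real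
  assumes g: "\<gamma> > 0" and h: "h > 0" and r: "r > 0"
  shows "(h / real r) * (\<Sum>l<k*r. (coefS \<gamma> c 0 h k r l)^2)
     \<le> 2 * c^2 * (\<gamma>^2 * (h / real r)^2 * (real k * h) + (1 + 2*\<gamma>*(h / real r)) / (2*\<gamma>))"
proof -
  define \<delta> where "\<delta> = h / real r"
  define n where "n = k * r"
  have d: "\<delta> > 0" using h r by (simp add: \<delta>_def)
  have T: "real k * h = real n * \<delta>" using r by (simp add: \<delta>_def n_def)
  define u where "u l = exp (-\<gamma> * (real n * \<delta> - real (Suc l) * \<delta>))" for l
  have each: "(coefS \<gamma> c 0 h k r l)^2 \<le> 2 * c^2 * (\<gamma>^2 * \<delta>^2 + (u l)^2)" if l: "l < n" for l
  proof -
    have l': "l < k * r" using l by (simp add: n_def)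
    note cc1 = coef_cases(1)[OF g h r l', where c=c and b=0]
    note cc = coef_cases(2-4)[OF g h r l']
    define A where "A = \<gamma> * exp (-\<gamma> * (real k * h)) * (\<Sum>m\<in>{Suc l..<k*r}. (h / real r) * exp (\<gamma> * (real m * (h / real r))))"
    have e: "coefS \<gamma> c 0 h k r l = c * (1 - A)" using cc1 unfolding A_def by simp
    have b1: "u l \<le> 1 - A" "1 - A \<le> \<gamma> * \<delta> + u l" "0 \<le> u l"
      using cc unfolding A_def u_def \<delta>_def T[unfolded \<delta>_def] by auto
    have "(1 - A)^2 \<le> (\<gamma> * \<delta> + u l)^2"
      using b1 by (intro power_mono) auto
    also have "\<dots> \<le> 2 * (\<gamma>^2 * \<delta>^2 + (u l)^2)"
    proof -
      have "0 \<le> (\<gamma> * \<delta> - u l)^2" by simp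
      then show ?thesis by (simp add: power2_eq_square algebra_simps)
    qed
    finally have "(1 - A)^2 \<le> 2 * (\<gamma>^2 * \<delta>^2 + (u l)^2)" .
    then have "c^2 * (1 - A)^2 \<le> c^2 * (2 * (\<gamma>^2 * \<delta>^2 + (u l)^2))"
      by (intro mult_left_mono) auto
    moreover have "(c * (1 - A))^2 = c^2 * (1 - A)^2" by (simp add: power_mult_distrib)
    ultimately show ?thesis unfolding e by (simp add: algebra_simps)
  qed
  have "\<delta> * (\<Sum>l<n. (coefS \<gamma> c 0 h k r l)^2) \<le> \<delta> * (\<Sum>l<n. 2 * c^2 * (\<gamma>^2 * \<delta>^2 + (u l)^2))"
    using d each by (intro mult_left_mono sum_mono) auto
  also have "\<dots> = 2 * c^2 * (\<gamma>^2 * \<delta>^2 * (real n * \<delta>) + \<delta> * (\<Sum>l<n. (u l)^2))"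
    by (simp add: sum.distrib sum_distrib_left algebra_simps)
  also have "\<dots> \<le> 2 * c^2 * (\<gamma>^2 * \<delta>^2 * (real n * \<delta>) + (1 + 2*\<gamma>*\<delta>) / (2*\<gamma>))"
    using sum_u_sq[OF g d, of n] unfolding u_def by (intro mult_left_mono add_left_mono) auto
  finally show ?thesis unfolding \<delta>_def n_def T[unfolded \<delta>_def n_def, symmetric] .
qed

lemma var_b1:
  fixes \<gamma> h c :: real
  assumes g: "\<gamma> > 0" and h: "h > 0" and r: "r > 0"
  shows "(h / real r) * (\<Sum>l<k*r. (coefS \<gamma> c 1 h k r l)^2)
     \<le> 2 * c^2 * (\<gamma>^2 * (h / real r)^2 * (real k * h) + \<gamma>^2 * h^2 * ((1 + 2*\<gamma>*h) / (2*\<gamma>)))"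
proof -
  define \<delta> where "\<delta> = h / real r"
  define n where "n = k * r"
  have d: "\<delta> > 0" using h r by (simp add: \<delta>_def)
  have rd: "real r * \<delta> = h" using r by (simp add: \<delta>_def)
  have T: "real k * h = real n * \<delta>" using r by (simp add: \<delta>_def n_def)
  define E where "E j = exp (-\<gamma> * (real k * h - real (Suc j) * h))" for j
  have each: "(coefS \<gamma> c 1 h k r l)^2 \<le> 2 * c^2 * (\<gamma>^2 * \<delta>^2 + \<gamma>^2 * h^2 * (E (l div r))^2)" if l: "l < n" for l
  proof -
    have l': "l < k * r" using l by (simp add: n_def)
    note cc1 = coef_cases(1)[OF g h r l', where c=c and b=1]
    note cc = coef_cases(2-4)[OF g h r l']
    define A where "A = \<gamma> * exp (-\<gamma> * (real k * h)) * (\<Sum>m\<in>{Suc l..<k*r}. (h / real r) * exp (\<gamma> * (real m * (h / real r))))"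
    define u where "u = exp (-\<gamma> * (real k * h - real (Suc l) * \<delta>))"
    define j where "j = l div r"
    have e: "coefS \<gamma> c 1 h k r l = c * (1 - A - E j)" using cc1 unfolding A_def E_def j_def by simp
    have b1: "u \<le> 1 - A" "1 - A \<le> \<gamma> * \<delta> + u" "0 \<le> u"
      using cc unfolding A_def u_def \<delta>_def by simp_all
    have lj1: "Suc l \<le> Suc j * r" unfolding j_def using r
      by (metis Suc_leI div_mult_mod_eq mod_less_divisor mult_Suc add.commute add_less_cancel_left mult.commute)
    have lj2: "j * r \<le> Suc l" unfolding j_def
      by (metis div_times_less_eq_dividend le_SucI mult.commute)
    have p1: "real (Suc l) * \<delta> \<le> real (Suc j) * h"
    proof -
      have "real (Suc l) \<le> real (Suc j * r)" using lj1 by (simp only: of_nat_le_iff)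
      then have "real (Suc l) * \<delta> \<le> real (Suc j * r) * \<delta>" using d by (intro mult_right_mono) auto
      moreover have "real (Suc j * r) * \<delta> = real (Suc j) * h" using rd by (simp only: of_nat_mult mult.assoc)
      ultimately show ?thesis by simp
    qed
    have p2: "real j * h \<le> real (Suc l) * \<delta>"
    proof -
      have "real (j * r) \<le> real (Suc l)" using lj2 by (simp only: of_nat_le_iff)
      then have "real (j * r) * \<delta> \<le> real (Suc l) * \<delta>" using d by (intro mult_right_mono) auto
      moreover have "real (j * r) * \<delta> = real j * h" using rd by (simp only: of_nat_mult mult.assoc)
      ultimately show ?thesis by linarith
    qed
    define x where "x = real (Suc j) * h - real (Suc l) * \<delta>"
    have x0: "0 \<le> x" "x \<le> h" using p1 p2 unfolding x_def by (auto simp: algebra_simps)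
    have uE: "u = E j * exp (-(\<gamma> * x))"
      unfolding u_def E_def x_def by (simp add: exp_add[symmetric] algebra_simps)
    have Epos: "E j > 0" by (simp add: E_def)
    have ule: "u \<le> E j" unfolding uE using Epos g x0 by (simp add: mult_le_cancel_left1)
    have Eu: "E j - u \<le> \<gamma> * h * E j"
    proof -
      have "E j - u = E j * (1 - exp (-(\<gamma> * x)))" unfolding uE by (simp add: algebra_simps)
      also have "\<dots> \<le> E j * (\<gamma> * x)" using Epos g x0 by (intro mult_left_mono one_minus_exp_le) auto
      also have "\<dots> \<le> E j * (\<gamma> * h)" using Epos g x0 by (intro mult_left_mono) auto
      finally show ?thesis by (simp add: algebra_simps)
    qed
    have ab: "\<bar>1 - A - E j\<bar> \<le> \<gamma> * \<delta> + \<gamma> * h * E j"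
    proof -
      have "1 - A - E j \<le> \<gamma> * \<delta>" using b1 ule by linarith
      moreover have "1 - A - E j \<ge> - (\<gamma> * h * E j)" using b1 Eu by linarith
      moreover have "0 \<le> \<gamma> * \<delta>" "0 \<le> \<gamma> * h * E j" using g d h Epos by auto
      ultimately show ?thesis by linarith
    qed
    have "(1 - A - E j)^2 \<le> (\<gamma> * \<delta> + \<gamma> * h * E j)^2"
      using ab by (metis abs_ge_zero order_trans power2_abs power_mono)
    also have "\<dots> \<le> 2 * (\<gamma>^2 * \<delta>^2 + \<gamma>^2 * h^2 * (E j)^2)"
    proof -
      have "0 \<le> (\<gamma> * \<delta> - \<gamma> * h * E j)^2" by simp
      then show ?thesis by (simp add: power2_eq_square algebra_simps)
    qed
    finally have "(1 - A - E j)^2 \<le> 2 * (\<gamma>^2 * \<delta>^2 + \<gamma>^2 * h^2 * (E j)^2)" .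
    then have "c^2 * (1 - A - E j)^2 \<le> c^2 * (2 * (\<gamma>^2 * \<delta>^2 + \<gamma>^2 * h^2 * (E j)^2))"
      by (intro mult_left_mono) auto
    moreover have "(c * (1 - A - E j))^2 = c^2 * (1 - A - E j)^2" by (simp add: power_mult_distrib)
    ultimately show ?thesis unfolding e j_def by (simp add: algebra_simps)
  qed
  have sumE: "\<delta> * (\<Sum>l<n. (E (l div r))^2) = h * (\<Sum>j<k. (E j)^2)"
  proof -
    have "(\<Sum>l<n. (E (l div r))^2) = (\<Sum>j<k. \<Sum>l\<in>{j*r..<j*r+r}. (E (l div r))^2)"
      unfolding n_def by (rule sum.nat_group[symmetric])
    also have "\<dots> = (\<Sum>j<k. \<Sum>l\<in>{j*r..<j*r+r}. (E j)^2)"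
    proof (intro sum.cong refl)
      fix j l assume "l \<in> {j*r..<j*r+r}"
      then have "l div r = j" using r by (auto simp: div_nat_eqI mult.commute)
      then show "(E (l div r))^2 = (E j)^2" by simp
    qed
    also have "\<dots> = (\<Sum>j<k. real r * (E j)^2)" by simp
    finally show ?thesis using rd by (simp add: sum_distrib_left[symmetric] mult.assoc[symmetric] mult.commute)
  qed
  have geo: "(\<Sum>j<k. (E j)^2) \<le> (1 + 2*\<gamma>*h) / (2*\<gamma>*h)"
  proof -
    have "(\<Sum>j<k. (E j)^2) = (\<Sum>j<k. exp (-(2*\<gamma>*h) * real (k - Suc j)))"
    proof (intro sum.cong refl)
      fix j assume "j \<in> {..<k}"
      then have "real (k - Suc j) = real k - real (Suc j)" by (simp add: of_nat_diff)
      then show "(E j)^2 = exp (-(2*\<gamma>*h) * real (k - Suc j))"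
        unfolding E_def by (simp add: power2_eq_square exp_add[symmetric] algebra_simps)
    qed
    also have "\<dots> = (\<Sum>i<k. exp (-(2*\<gamma>*h) * real i))"
      by (rule sum.nat_diff_reindex)
    also have "\<dots> \<le> (1 + 2*\<gamma>*h) / (2*\<gamma>*h)"
      by (rule geom_exp_bound) (use g h in simp)
    finally show ?thesis .
  qed
  have "\<delta> * (\<Sum>l<n. (coefS \<gamma> c 1 h k r l)^2) \<le> \<delta> * (\<Sum>l<n. 2 * c^2 * (\<gamma>^2 * \<delta>^2 + \<gamma>^2 * h^2 * (E (l div r))^2))"
    using d each by (intro mult_left_mono sum_mono) auto
  also have "\<dots> = 2 * c^2 * (\<gamma>^2 * \<delta>^2 * (real n * \<delta>) + \<gamma>^2 * h^2 * (\<delta> * (\<Sum>l<n. (E (l div r))^2)))"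
    by (simp add: sum.distrib sum_distrib_left algebra_simps power2_eq_square)
  also have "\<dots> = 2 * c^2 * (\<gamma>^2 * \<delta>^2 * (real n * \<delta>) + \<gamma>^2 * h^2 * (h * (\<Sum>j<k. (E j)^2)))"
    unfolding sumE ..
  also have "\<dots> \<le> 2 * c^2 * (\<gamma>^2 * \<delta>^2 * (real n * \<delta>) + \<gamma>^2 * h^2 * (h * ((1 + 2*\<gamma>*h) / (2*\<gamma>*h))))"
    using geo h by (intro mult_left_mono add_left_mono) auto
  also have "h * ((1 + 2*\<gamma>*h) / (2*\<gamma>*h)) = (1 + 2*\<gamma>*h) / (2*\<gamma>)" using h by simp
  finally show ?thesis unfolding \<delta>_def n_def T[unfolded \<delta>_def n_def, symmetric] .
qed


definition Qi :: "real \<Rightarrow> 'd \<Rightarrow> (real ^ 'd) \<times> (real ^ 'd) \<Rightarrow> real" where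
  "Qi \<gamma> i p = fst p $ i + snd p $ i / \<gamma>"

definition Sfun :: "real \<Rightarrow> real \<Rightarrow> real \<Rightarrow> nat \<Rightarrow> 'd \<Rightarrow> (nat \<Rightarrow> (real ^ 'd) \<times> (real ^ 'd)) \<Rightarrow> real" where
  "Sfun \<gamma> b h k i \<zeta> = snd (\<zeta> k) $ i - \<gamma> * b *
     (\<Sum>j<k. exp (-\<gamma> * (real k * h - real (Suc j) * h)) * (Qi \<gamma> i (\<zeta> (Suc j)) - Qi \<gamma> i (\<zeta> j)))"

lemma BM_coord: "is_BM P W \<Longrightarrow> is_BM1 P (\<lambda>t \<omega>. W t \<omega> $ i)"
  unfolding is_BM_def by blast

lemma process_limit:
  fixes W :: "real \<Rightarrow> 'a \<Rightarrow> real ^ 'd" and Z :: "real \<Rightarrow> 'a \<Rightarrow> (real ^ 'd) \<times> (real ^ 'd)"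
  assumes g: "\<gamma> > 0" and BM: "is_BM P W" and sol: "solves_kinetic \<gamma> P W z Z" and h: "h > 0" and k: "k > 0"
  shows "AE \<omega> in P. (\<lambda>r. \<Sum>l<k*r. coefS \<gamma> (sqrt (2*\<gamma>)) b h k r l * Dinc (\<lambda>t \<omega>. W t \<omega> $ i) (h / real r) l \<omega>)
     \<longlonglongrightarrow> Sfun \<gamma> b h k i (\<lambda>j. Z (h * real j) \<omega>) - exp (-\<gamma> * (real k * h)) * (snd z $ i)"
proof -
  have BM1: "is_BM1 P (\<lambda>t \<omega>. W t \<omega> $ i)" by (rule BM_coord[OF BM])
  have W0: "AE \<omega> in P. W 0 \<omega> $ i = 0" using BM1_zero[OF BM1] by simp
  have S: "AE \<omega> in P. continuous_on {0..} (\<lambda>t. Z t \<omega>) \<and>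
        (\<forall>t\<ge>0. fst (Z t \<omega>) = fst z + integral {0..t} (\<lambda>s. snd (Z s \<omega>)) \<and>
                snd (Z t \<omega>) = snd z - \<gamma> *\<^sub>R integral {0..t} (\<lambda>s. snd (Z s \<omega>))
                               + sqrt (2 * \<gamma>) *\<^sub>R W t \<omega>)"
    using sol unfolding solves_kinetic_def by blast
  show ?thesis using W0 S
  proof eventually_elim
    case (elim \<omega>)
    define c where "c = sqrt (2*\<gamma>)"
    have cpos: "c > 0" using g by (simp add: c_def)
    define T where "T = real k * h"
    have T0: "T \<ge> 0" using h by (simp add: T_def)
    define Vv where "Vv t = snd (Z t \<omega>)" for t
    define Vf where "Vf t = Vv t $ i" for t
    define w where "w t = W t \<omega> $ i" for t
    have cZ: "continuous_on {0..T} (\<lambda>t. Z t \<omega>)"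
      using elim(2)[THEN conjunct1] by (rule continuous_on_subset) auto
    have cVv: "continuous_on {0..t} Vv" if "t \<le> T" for t
      unfolding Vv_def by (rule continuous_on_subset[of "{0..T}"]) (use that in \<open>auto intro!: continuous_intros cZ\<close>)
    have cVf: "continuous_on {0..t} Vf" if "t \<le> T" for t
      unfolding Vf_def by (intro continuous_intros cVv that)
    have intI: "integral {0..t} Vf = integral {0..t} Vv $ i" if "t \<le> T" for t
      unfolding Vf_def using integrable_continuous_interval[OF cVv[OF that]] by simp
    have eqV: "Vf t = snd z $ i - \<gamma> * integral {0..t} Vf + c * w t" if "0 \<le> t" "t \<le> T" for t
    proof -
      have "snd (Z t \<omega>) = snd z - \<gamma> *\<^sub>R integral {0..t} (\<lambda>s. snd (Z s \<omega>)) + sqrt (2 * \<gamma>) *\<^sub>R W t \<omega>"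
        using elim(2) that(1) by blast
      then have "snd (Z t \<omega>) $ i = snd z $ i - \<gamma> * (integral {0..t} Vv $ i) + c * (W t \<omega> $ i)"
        unfolding Vv_def c_def by simp
      then show ?thesis using intI[OF that(2)] unfolding Vf_def w_def by (simp add: Vv_def)
    qed
    have eqX: "fst (Z t \<omega>) $ i = fst z $ i + integral {0..t} Vf" if "0 \<le> t" "t \<le> T" for t
    proof -
      have "fst (Z t \<omega>) = fst z + integral {0..t} (\<lambda>s. snd (Z s \<omega>))"
        using elim(2) that(1) by blast
      then have "fst (Z t \<omega>) $ i = fst z $ i + integral {0..t} Vv $ i"
        unfolding Vv_def by simp
      then show ?thesis using intI[OF that(2)] by simp
    qed
    have cI: "continuous_on {0..T} (\<lambda>t. integral {0..t} Vf)"
      by (rule indefinite_integral_continuous_1[OF integrable_continuous_interval[OF cVf[OF order_refl]]])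
    have cw: "continuous_on {0..T} w"
    proof -
      have "continuous_on {0..T} (\<lambda>t. (Vf t - snd z $ i + \<gamma> * integral {0..t} Vf) / c)"
        by (intro continuous_intros cVf[OF order_refl] cI) (use cpos in simp)
      moreover have "(Vf t - snd z $ i + \<gamma> * integral {0..t} Vf) / c = w t" if "t \<in> {0..T}" for t
        using eqV[of t] that cpos by (simp add: field_simps)
      ultimately show ?thesis using continuous_on_eq by blast
    qed
    have ode: "Vf T = exp (-\<gamma> * T) * (snd z $ i) + c * (w T - \<gamma> * exp (-\<gamma> * T) * integral {0..T} (\<lambda>s. exp (\<gamma> * s) * w s))"
      by (rule ode_solution[OF g cVf[OF order_refl] cw eqV T0]) auto
    have Qf: "Qi \<gamma> i (Z t \<omega>) = fst z $ i + snd z $ i / \<gamma> + (c / \<gamma>) * w t" if "0 \<le> t" "t \<le> T" for t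
      using eqX[OF that] eqV[OF that] g unfolding Qi_def Vf_def Vv_def by (simp add: field_simps)
    have Qd: "\<gamma> * (Qi \<gamma> i (Z (h * real (Suc j)) \<omega>) - Qi \<gamma> i (Z (h * real j) \<omega>)) = c * (w (real (Suc j) * h) - w (real j * h))"
      if "j < k" for j
    proof -
      have "h * real (Suc j) \<le> T" "h * real j \<le> T" using that h unfolding T_def
        by (auto intro!: mult_left_mono simp: mult.commute)
      then show ?thesis using Qf[of "h * real (Suc j)"] Qf[of "h * real j"] h g
        by (simp add: field_simps)
    qed
    have Seq: "Sfun \<gamma> b h k i (\<lambda>j. Z (h * real j) \<omega>) = Vf T - b * (\<Sum>j<k. exp (-\<gamma> * (T - real (Suc j) * h)) * (c * (w (real (Suc j) * h) - w (real j * h))))"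
    proof -
      have "Sfun \<gamma> b h k i (\<lambda>j. Z (h * real j) \<omega>) = Vf T - b * (\<Sum>j<k. exp (-\<gamma> * (T - real (Suc j) * h)) * (\<gamma> * (Qi \<gamma> i (Z (h * real (Suc j)) \<omega>) - Qi \<gamma> i (Z (h * real j) \<omega>))))"
        unfolding Sfun_def Vf_def Vv_def T_def by (simp add: sum_distrib_left algebra_simps)
      also have "\<dots> = Vf T - b * (\<Sum>j<k. exp (-\<gamma> * (T - real (Suc j) * h)) * (c * (w (real (Suc j) * h) - w (real j * h))))"
        using Qd by simp
      finally show ?thesis .
    qed
    have w0: "w 0 = 0" using elim(1) by (simp add: w_def)
    have cw': "continuous_on {0..real k * h} w" using cw by (simp add: T_def)
    have L: "(\<lambda>r. \<Sum>l<k*r. coefS \<gamma> c b h k r l * Dp w (h / real r) l) \<longlonglongrightarrow>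
     c * (w (real k * h) - \<gamma> * exp (-\<gamma> * (real k * h)) * integral {0..real k * h} (\<lambda>s. exp (\<gamma> * s) * w s)
       - b * (\<Sum>j<k. exp (-\<gamma> * (real k * h - real (Suc j) * h)) * (w (real (Suc j) * h) - w (real j * h))))"
      by (rule stat_limit[OF w0 cw' k h])
    have eqlim: "c * (w (real k * h) - \<gamma> * exp (-\<gamma> * (real k * h)) * integral {0..real k * h} (\<lambda>s. exp (\<gamma> * s) * w s)
       - b * (\<Sum>j<k. exp (-\<gamma> * (real k * h - real (Suc j) * h)) * (w (real (Suc j) * h) - w (real j * h))))
       = Sfun \<gamma> b h k i (\<lambda>j. Z (h * real j) \<omega>) - exp (-\<gamma> * (real k * h)) * (snd z $ i)"
      unfolding Seq ode unfolding T_def by (simp add: algebra_simps sum_distrib_left)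
    have Deq: "Dinc (\<lambda>t \<omega>. W t \<omega> $ i) \<delta> l \<omega> = Dp w \<delta> l" for \<delta> l
      unfolding Dinc_def Dp_def w_def ..
    have L': "(\<lambda>r. \<Sum>l<k*r. coefS \<gamma> c b h k r l * Dp w (h / real r) l) \<longlonglongrightarrow>
       Sfun \<gamma> b h k i (\<lambda>j. Z (h * real j) \<omega>) - exp (-\<gamma> * (real k * h)) * (snd z $ i)"
      using L unfolding eqlim .
    show ?case unfolding Deq using L' unfolding c_def .
  qed
qed


lemma fst_bm[measurable (raw)]:
  fixes g :: "'a \<Rightarrow> ('b::topological_space) \<times> ('c::topological_space)"
  shows "g \<in> borel_measurable M \<Longrightarrow> (\<lambda>x. fst (g x)) \<in> borel_measurable M"
  by (rule borel_measurable_continuous_on[OF continuous_on_fst[OF continuous_on_id]])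

lemma snd_bm[measurable (raw)]:
  fixes g :: "'a \<Rightarrow> ('b::topological_space) \<times> ('c::topological_space)"
  shows "g \<in> borel_measurable M \<Longrightarrow> (\<lambda>x. snd (g x)) \<in> borel_measurable M"
  by (rule borel_measurable_continuous_on[OF continuous_on_snd[OF continuous_on_id]])

lemma nth_bm[measurable (raw)]:
  fixes g :: "'a \<Rightarrow> real ^ 'd"
  shows "g \<in> borel_measurable M \<Longrightarrow> (\<lambda>x. g x $ i) \<in> borel_measurable M"
  by (rule borel_measurable_continuous_on[where f="\<lambda>x. x $ i"]) (auto intro: continuous_intros)

lemma m1: "(\<lambda>\<zeta>::nat \<Rightarrow> ((real^'d) \<times> (real^'d)) \<times> ((real^'d) \<times> (real^'d)). fst (\<zeta> j)) \<in> measurable (Pi\<^sub>M UNIV (\<lambda>_. borel)) borel"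
  by measurable

lemma m2: "(\<lambda>\<zeta>::nat \<Rightarrow> (real^'d) \<times> (real^'d). snd (\<zeta> j) $ i) \<in> borel_measurable (Pi\<^sub>M UNIV (\<lambda>_. borel))"
  by measurable

lemma m4: "Sfun \<gamma> b h k i \<in> borel_measurable (Pi\<^sub>M UNIV (\<lambda>_. borel))"
  unfolding Sfun_def Qi_def by measurable

lemma m6: "Measurable.pred (Pi\<^sub>M UNIV (\<lambda>_. borel)) (\<lambda>\<zeta>::nat \<Rightarrow> ((real^'d) \<times> (real^'d)) \<times> ((real^'d) \<times> (real^'d)). fst (\<zeta> k) \<noteq> snd (\<zeta> k))"
  by measurable

lemma ev_var_b0:
  fixes \<gamma> h c :: real
  assumes g: "\<gamma> > 0" and h: "h > 0"
  shows "eventually (\<lambda>r. (h / real r) * (\<Sum>l<k*r. (coefS \<gamma> c 0 h k r l)^2) \<le> c^2 / \<gamma> + 1) sequentially"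
proof -
  define Bd where "Bd r = 2 * c^2 * (\<gamma>^2 * (h / real r)^2 * (real k * h) + (1 + 2*\<gamma>*(h / real r)) / (2*\<gamma>))" for r :: nat
  have "Bd \<longlonglongrightarrow> 2 * c^2 * (\<gamma>^2 * 0^2 * (real k * h) + (1 + 2*\<gamma>*0) / (2*\<gamma>))"
    unfolding Bd_def by (intro tendsto_intros) (use g in auto)
  moreover have "2 * c^2 * (\<gamma>^2 * 0^2 * (real k * h) + (1 + 2*\<gamma>*0) / (2*\<gamma>)) = c^2 / \<gamma>"
    using g by simp
  ultimately have "Bd \<longlonglongrightarrow> c^2 / \<gamma>" by simp
  then have ev1: "eventually (\<lambda>r. Bd r < c^2 / \<gamma> + 1) sequentially"
    by (rule order_tendstoD) simp
  have ev2: "eventually (\<lambda>r. r > (0::nat)) sequentially"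
    by (rule eventually_gt_at_top)
  show ?thesis using ev1 ev2
  proof eventually_elim
    case (elim r)
    then show ?case using var_b0[OF g h elim(2), where k=k and c=c] unfolding Bd_def by linarith
  qed
qed

lemma ev_var_b1:
  fixes \<gamma> h c :: real
  assumes g: "\<gamma> > 0" and h: "h > 0"
  shows "eventually (\<lambda>r. (h / real r) * (\<Sum>l<k*r. (coefS \<gamma> c 1 h k r l)^2)
     \<le> 2 * c^2 * (\<gamma>^2 * h^2 * ((1 + 2*\<gamma>*h) / (2*\<gamma>))) + h^2) sequentially"
proof -
  define L where "L = 2 * c^2 * (\<gamma>^2 * h^2 * ((1 + 2*\<gamma>*h) / (2*\<gamma>)))"
  define Bd where "Bd r = 2 * c^2 * (\<gamma>^2 * (h / real r)^2 * (real k * h) + \<gamma>^2 * h^2 * ((1 + 2*\<gamma>*h) / (2*\<gamma>)))" for r :: nat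
  have "Bd \<longlonglongrightarrow> 2 * c^2 * (\<gamma>^2 * 0^2 * (real k * h) + \<gamma>^2 * h^2 * ((1 + 2*\<gamma>*h) / (2*\<gamma>)))"
    unfolding Bd_def by (intro tendsto_intros)
  then have "Bd \<longlonglongrightarrow> L" by (simp add: L_def)
  then have ev1: "eventually (\<lambda>r. Bd r < L + h^2) sequentially"
    by (rule order_tendstoD) (use h in simp)
  have ev2: "eventually (\<lambda>r. r > (0::nat)) sequentially"
    by (rule eventually_gt_at_top)
  show ?thesis using ev1 ev2
  proof eventually_elim
    case (elim r)
    then show ?case using var_b1[OF g h elim(2), where k=k and c=c] unfolding Bd_def L_def by linarith
  qed
qed

lemma Z0_AE:
  fixes W :: "real \<Rightarrow> 'a \<Rightarrow> real ^ 'd" and Z :: "real \<Rightarrow> 'a \<Rightarrow> (real ^ 'd) \<times> (real ^ 'd)"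
  assumes BM: "is_BM P W" and sol: "solves_kinetic \<gamma> P W z Z"
  shows "AE \<omega> in P. Z 0 \<omega> = z"
proof -
  have "AE \<omega> in P. \<forall>i\<in>UNIV. W 0 \<omega> $ i = 0"
    by (rule AE_finite_allI) (use BM1_zero[OF BM_coord[OF BM]] in auto)
  moreover have "AE \<omega> in P. (\<forall>t\<ge>0. fst (Z t \<omega>) = fst z + integral {0..t} (\<lambda>s. snd (Z s \<omega>)) \<and>
                snd (Z t \<omega>) = snd z - \<gamma> *\<^sub>R integral {0..t} (\<lambda>s. snd (Z s \<omega>))
                               + sqrt (2 * \<gamma>) *\<^sub>R W t \<omega>)"
    using sol unfolding solves_kinetic_def by (auto elim: AE_mp)
  ultimately show ?thesis
  proof eventually_elim
    case (elim \<omega>)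
    have W0: "W 0 \<omega> = 0" using elim(1) by (simp add: vec_eq_iff)
    have e: "fst (Z 0 \<omega>) = fst z + integral {0..0} (\<lambda>s. snd (Z s \<omega>))"
            "snd (Z 0 \<omega>) = snd z - \<gamma> *\<^sub>R integral {0..0} (\<lambda>s. snd (Z s \<omega>)) + sqrt (2 * \<gamma>) *\<^sub>R W 0 \<omega>"
      using elim(2) by blast+
    have i0: "integral {0..0::real} (\<lambda>s. snd (Z s \<omega>)) = 0" by simp
    show ?case using e unfolding i0 W0 by (simp add: prod_eq_iff)
  qed
qed


lemma transfer_int:
  fixes f :: "'y \<Rightarrow> real"
  assumes F: "F \<in> measurable \<mu> N" and G: "G \<in> measurable P N" and eq: "distr \<mu> N F = distr P N G"
    and f: "f \<in> borel_measurable N"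
  shows "(\<integral>\<omega>. f (F \<omega>) \<partial>\<mu>) = (\<integral>\<omega>. f (G \<omega>) \<partial>P)"
proof -
  have "(\<integral>\<omega>. f (F \<omega>) \<partial>\<mu>) = (\<integral>x. f x \<partial>distr \<mu> N F)" by (rule integral_distr[OF F f, symmetric])
  also have "\<dots> = (\<integral>x. f x \<partial>distr P N G)" unfolding eq ..
  also have "\<dots> = (\<integral>\<omega>. f (G \<omega>) \<partial>P)" by (rule integral_distr[OF G f])
  finally show ?thesis .
qed

lemma transfer_AE:
  assumes F: "F \<in> measurable \<mu> N" and G: "G \<in> measurable P N" and eq: "distr \<mu> N F = distr P N G"
    and Q: "{x \<in> space N. Q x} \<in> sets N" and AEP: "AE \<omega> in P. Q (G \<omega>)"
  shows "AE \<omega> in \<mu>. Q (F \<omega>)"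
proof -
  have "AE x in distr P N G. Q x" using AE_distr_iff[OF G Q] AEP by simp
  then have "AE x in distr \<mu> N F. Q x" unfolding eq .
  then show ?thesis using AE_distr_iff[OF F Q] by simp
qed

lemma min_mult_ge:
  fixes a b :: real
  assumes a: "0 \<le> a" and b: "0 \<le> b"
  shows "min 1 a * min 1 b \<le> min 1 (a * b)"
proof (cases "a \<le> 1")
  case True
  show ?thesis
  proof (cases "b \<le> 1")
    case True
    have "a * b \<le> 1" using \<open>a \<le> 1\<close> True a b by (simp add: mult_le_one)
    then show ?thesis using \<open>a \<le> 1\<close> True by simp
  next
    case False
    have "a * 1 \<le> a * b" using False a by (intro mult_left_mono) auto
    then show ?thesis using \<open>a \<le> 1\<close> False by simp
  qed
next
  case False
  show ?thesis
  proof (cases "b \<le> 1")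
    case True
    have "1 * b \<le> a * b" using False b by (intro mult_right_mono) auto
    then show ?thesis using False True by simp
  next
    case F2: False
    have "1 * 1 \<le> a * b" using False F2 by (intro mult_mono) auto
    then show ?thesis using False F2 by simp
  qed
qed

lemma final_arith:
  fixes h dv K1 s0 E :: real
  assumes h: "h > 0" and dv: "dv > 0" and K1: "K1 > 0" and s0: "s0 > 0" and E: "E > 0"
  defines "\<sigma> \<equiv> (if h \<le> 1 then K1 * h else s0)"
  shows "(5/162) * min 1 (min (dv/K1) (dv/s0)) * min 1 (E / h) \<le> (5/81) * ((E * dv) / (\<sigma> + E * dv))"
proof -
  define \<Delta> where "\<Delta> = E * dv"
  have sp: "\<sigma> > 0" using h K1 s0 by (simp add: \<sigma>_def)
  have Dp: "\<Delta> > 0" using E dv by (simp add: \<Delta>_def)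
  have X: "min 1 (\<Delta> / \<sigma>) / 2 \<le> \<Delta> / (\<sigma> + \<Delta>)"
  proof (cases "\<Delta> \<le> \<sigma>")
    case True
    then have "\<Delta> / (\<sigma> + \<Delta>) \<ge> \<Delta> / (2 * \<sigma>)" using sp Dp by (intro divide_left_mono) auto
    moreover have "min 1 (\<Delta> / \<sigma>) / 2 \<le> (\<Delta> / \<sigma>) / 2" by simp
    moreover have "(\<Delta> / \<sigma>) / 2 = \<Delta> / (2 * \<sigma>)" by simp
    ultimately show ?thesis by (metis order_trans)
  next
    case False
    then have "\<Delta> / (\<sigma> + \<Delta>) \<ge> \<Delta> / (2 * \<Delta>)" using sp Dp by (intro divide_left_mono) auto
    then have "\<Delta> / (\<sigma> + \<Delta>) \<ge> 1/2" using Dp by simp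
    moreover have "min 1 (\<Delta> / \<sigma>) / 2 \<le> 1 / 2" by simp
    ultimately show ?thesis by (metis order_trans)
  qed
  define a where "a = (if h \<le> 1 then dv / K1 else dv / s0)"
  have a0: "a \<ge> 0" using dv K1 s0 by (simp add: a_def)
  have amin: "min 1 (min (dv/K1) (dv/s0)) \<le> min 1 a" by (auto simp: a_def)
  have Ds: "a * (E / h) \<le> \<Delta> / \<sigma>"
  proof (cases "h \<le> 1")
    case True
    then show ?thesis using h K1 by (simp add: a_def \<sigma>_def \<Delta>_def field_simps)
  next
    case False
    then have "dv / s0 * (E / h) \<le> dv / s0 * (E / 1)" using h E dv s0
      by (intro mult_left_mono divide_left_mono) auto
    then show ?thesis using False by (simp add: a_def \<sigma>_def \<Delta>_def field_simps)
  qed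
  have "min 1 (min (dv/K1) (dv/s0)) * min 1 (E / h) \<le> min 1 a * min 1 (E / h)"
    using amin E h by (intro mult_right_mono) auto
  also have "\<dots> \<le> min 1 (a * (E / h))" by (rule min_mult_ge[OF a0]) (use E h in simp)
  also have "\<dots> \<le> min 1 (\<Delta> / \<sigma>)" using Ds by simp
  finally have "min 1 (min (dv/K1) (dv/s0)) * min 1 (E / h) \<le> min 1 (\<Delta> / \<sigma>)" .
  then have Y2: "min 1 (min (dv/K1) (dv/s0)) * min 1 (E / h) \<le> 2 * (\<Delta> / (\<sigma> + \<Delta>))"
  proof -
    have aux: "\<And>a b c::real. a \<le> b \<Longrightarrow> b/2 \<le> c \<Longrightarrow> a \<le> 2*c" by linarith
    show ?thesis by (rule aux[OF _ X]) fact
  qed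
  have "(5/162) * (min 1 (min (dv/K1) (dv/s0)) * min 1 (E / h)) \<le> (5/162) * (2 * (\<Delta> / (\<sigma> + \<Delta>)))"
    by (rule mult_left_mono[OF Y2]) simp
  then show ?thesis unfolding \<Delta>_def by (simp add: mult.assoc)
qed


lemma Sfun_cong:
  assumes "\<And>j. Qi \<gamma> i (\<zeta> j) = Qi \<gamma> i (\<xi> j)" "\<zeta> k = \<xi> k"
  shows "Sfun \<gamma> b h k i \<zeta> = Sfun \<gamma> b h k i \<xi>"
  unfolding Sfun_def using assms by simp

lemma Qi_vec: "Qi \<gamma> i p = (fst p + (1 / \<gamma>) *\<^sub>R snd p) $ i"
  unfolding Qi_def by simp

lemma PiM_meas_Z:
  fixes Z :: "real \<Rightarrow> 'a \<Rightarrow> (real ^ 'd) \<times> (real ^ 'd)"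
  assumes "solves_kinetic \<gamma> P W z Z" "h > 0"
  shows "(\<lambda>\<omega> j. Z (h * real j) \<omega>) \<in> measurable P (Pi\<^sub>M UNIV (\<lambda>_. borel))"
proof (rule measurable_PiM_single')
  fix j :: nat
  have "h * real j \<ge> 0" using assms(2) by simp
  then show "(\<lambda>\<omega>. Z (h * real j) \<omega>) \<in> borel_measurable P"
    using assms(1) unfolding solves_kinetic_def by blast
qed auto

lemma PiM_meas_proj:
  fixes \<mu> :: "(nat \<Rightarrow> ((real ^ 'd) \<times> (real ^ 'd)) \<times> ((real ^ 'd) \<times> (real ^ 'd))) measure"
  assumes "sets \<mu> = sets (Pi\<^sub>M UNIV (\<lambda>_. borel))"
  shows "(\<lambda>\<omega> j. fst (\<omega> j)) \<in> measurable \<mu> (Pi\<^sub>M UNIV (\<lambda>_. borel))"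
    "(\<lambda>\<omega> j. snd (\<omega> j)) \<in> measurable \<mu> (Pi\<^sub>M UNIV (\<lambda>_. borel))"
proof -
  have X1: "(\<lambda>\<omega> j. fst (\<omega> j)) \<in> measurable (Pi\<^sub>M UNIV (\<lambda>_. borel) :: (nat \<Rightarrow> ((real ^ 'd) \<times> (real ^ 'd)) \<times> ((real ^ 'd) \<times> (real ^ 'd))) measure) (Pi\<^sub>M UNIV (\<lambda>_. borel))"
    by (rule measurable_PiM_single') (auto intro!: fst_bm snd_bm measurable_component_singleton)
  show "(\<lambda>\<omega> j. fst (\<omega> j)) \<in> measurable \<mu> (Pi\<^sub>M UNIV (\<lambda>_. borel))"
    by (subst measurable_cong_sets[OF assms refl]) (rule X1)
  have X2: "(\<lambda>\<omega> j. snd (\<omega> j)) \<in> measurable (Pi\<^sub>M UNIV (\<lambda>_. borel) :: (nat \<Rightarrow> ((real ^ 'd) \<times> (real ^ 'd)) \<times> ((real ^ 'd) \<times> (real ^ 'd))) measure) (Pi\<^sub>M UNIV (\<lambda>_. borel))"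
    by (rule measurable_PiM_single') (auto intro!: fst_bm snd_bm measurable_component_singleton)
  show "(\<lambda>\<omega> j. snd (\<omega> j)) \<in> measurable \<mu> (Pi\<^sub>M UNIV (\<lambda>_. borel))"
    by (subst measurable_cong_sets[OF assms refl]) (rule X2)
qed

lemma mu_AE0:
  fixes \<mu> :: "(nat \<Rightarrow> ((real ^ 'd) \<times> (real ^ 'd)) \<times> ((real ^ 'd) \<times> (real ^ 'd))) measure"
    and W :: "real \<Rightarrow> 'a \<Rightarrow> real ^ 'd" and Wt :: "real \<Rightarrow> 'b \<Rightarrow> real ^ 'd"
  assumes BM: "is_BM P W" and BMt: "is_BM Pt Wt"
    and sol: "solves_kinetic \<gamma> P W z Z" and solt: "solves_kinetic \<gamma> Pt Wt zt Zt" and h: "h > 0"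
    and sets: "sets \<mu> = sets (Pi\<^sub>M UNIV (\<lambda>_. borel))"
    and d1: "distr \<mu> (Pi\<^sub>M UNIV (\<lambda>_. borel)) (\<lambda>\<omega> k. fst (\<omega> k))
              = distr P (Pi\<^sub>M UNIV (\<lambda>_. borel)) (\<lambda>\<omega> k. Z (h * real k) \<omega>)"
    and d2: "distr \<mu> (Pi\<^sub>M UNIV (\<lambda>_. borel)) (\<lambda>\<omega> k. snd (\<omega> k))
              = distr Pt (Pi\<^sub>M UNIV (\<lambda>_. borel)) (\<lambda>\<omega> k. Zt (h * real k) \<omega>)"
  shows "AE \<omega> in \<mu>. fst (\<omega> 0) = z \<and> snd (\<omega> 0) = zt"
proof -
  have Q1: "{x \<in> space (Pi\<^sub>M UNIV (\<lambda>_. borel)). x 0 = z} \<in> sets (Pi\<^sub>M UNIV (\<lambda>_. borel) :: (nat \<Rightarrow> (real ^ 'd) \<times> (real ^ 'd)) measure)"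
    by measurable
  have Q2: "{x \<in> space (Pi\<^sub>M UNIV (\<lambda>_. borel)). x 0 = zt} \<in> sets (Pi\<^sub>M UNIV (\<lambda>_. borel) :: (nat \<Rightarrow> (real ^ 'd) \<times> (real ^ 'd)) measure)"
    by measurable
  have a1: "AE \<omega> in \<mu>. fst (\<omega> 0) = z"
    using transfer_AE[OF PiM_meas_proj(1)[OF sets] PiM_meas_Z[OF sol h] d1 Q1] Z0_AE[OF BM sol] by simp
  have a2: "AE \<omega> in \<mu>. snd (\<omega> 0) = zt"
    using transfer_AE[OF PiM_meas_proj(2)[OF sets] PiM_meas_Z[OF solt h] d2 Q2] Z0_AE[OF BMt solt] by simp
  show ?thesis using a1 a2 by eventually_elim simp
qed


lemma main_k:
  fixes \<gamma> :: real
    and P :: "'a measure" and W :: "real \<Rightarrow> 'a \<Rightarrow> real ^ 'd"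
    and Pt :: "'b measure" and Wt :: "real \<Rightarrow> 'b \<Rightarrow> real ^ 'd"
    and z zt :: "(real ^ 'd) \<times> (real ^ 'd)"
    and Z :: "real \<Rightarrow> 'a \<Rightarrow> (real ^ 'd) \<times> (real ^ 'd)"
    and Zt :: "real \<Rightarrow> 'b \<Rightarrow> (real ^ 'd) \<times> (real ^ 'd)"
    and \<mu> :: "(nat \<Rightarrow> ((real ^ 'd) \<times> (real ^ 'd)) \<times> ((real ^ 'd) \<times> (real ^ 'd))) measure"
  assumes g: "\<gamma> > 0"
    and BM: "is_BM P W" and BMt: "is_BM Pt Wt"
    and sol: "solves_kinetic \<gamma> P W z Z" and solt: "solves_kinetic \<gamma> Pt Wt zt Zt"
    and vi: "snd z $ i \<noteq> snd zt $ i" and h: "h > 0" and k: "k > 0"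
    and pmu: "prob_space \<mu>"
    and sets: "sets \<mu> = sets (Pi\<^sub>M UNIV (\<lambda>_. borel))"
    and d1: "distr \<mu> (Pi\<^sub>M UNIV (\<lambda>_. borel)) (\<lambda>\<omega> k. fst (\<omega> k))
              = distr P (Pi\<^sub>M UNIV (\<lambda>_. borel)) (\<lambda>\<omega> k. Z (h * real k) \<omega>)"
    and d2: "distr \<mu> (Pi\<^sub>M UNIV (\<lambda>_. borel)) (\<lambda>\<omega> k. snd (\<omega> k))
              = distr Pt (Pi\<^sub>M UNIV (\<lambda>_. borel)) (\<lambda>\<omega> k. Zt (h * real k) \<omega>)"
    and QG: "measure \<mu> {\<omega> \<in> space \<mu>. \<forall>k. fst (fst (\<omega> k)) + (1 / \<gamma>) *\<^sub>R snd (fst (\<omega> k))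
                                       = fst (snd (\<omega> k)) + (1 / \<gamma>) *\<^sub>R snd (snd (\<omega> k))} = 1"
  defines "\<sigma> \<equiv> (if h \<le> 1 then sqrt (2 * \<gamma>^2 * (1 + 2 * \<gamma>) + 1) * h else sqrt 3)"
  shows "(5/81) * ((exp (-\<gamma> * (real k * h)) * \<bar>snd z $ i - snd zt $ i\<bar>) / (\<sigma> + exp (-\<gamma> * (real k * h)) * \<bar>snd z $ i - snd zt $ i\<bar>))
     \<le> measure \<mu> {\<omega> \<in> space \<mu>. fst (\<omega> k) \<noteq> snd (\<omega> k)}"
proof -
  interpret mu: prob_space \<mu> by (rule pmu)
  define c0 where "c0 = sqrt (2 * \<gamma>)"
  have c0sq: "c0^2 = 2 * \<gamma>" using g by (simp add: c0_def)
  define b :: real where "b = (if h \<le> 1 then 1 else 0)"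
  define E where "E = exp (-\<gamma> * (real k * h))"
  define m where "m = E * snd z $ i"
  define mt where "mt = E * snd zt $ i"
  have Epos: "E > 0" by (simp add: E_def)
  have mm: "m \<noteq> mt" using vi Epos by (simp add: m_def mt_def)
  have adm: "\<bar>m - mt\<bar> = E * \<bar>snd z $ i - snd zt $ i\<bar>"
    using Epos by (simp add: m_def mt_def right_diff_distrib[symmetric] abs_mult)
  have K1p: "sqrt (2 * \<gamma>^2 * (1 + 2 * \<gamma>) + 1) > 0"
  proof -
    have "2 * \<gamma>^2 * (1 + 2 * \<gamma>) \<ge> 0" using g by simp
    then show ?thesis by simp
  qed
  have sig: "\<sigma> > 0" using h K1p by (simp add: \<sigma>_def)
  have var: "eventually (\<lambda>r. (h / real r) * (\<Sum>l<k*r. (coefS \<gamma> c0 b h k r l)^2) \<le> \<sigma>^2) sequentially"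
  proof (cases "h \<le> 1")
    case True
    have bnd: "2 * c0^2 * (\<gamma>^2 * h^2 * ((1 + 2*\<gamma>*h) / (2*\<gamma>))) + h^2 \<le> \<sigma>^2"
    proof -
      have "2 * c0^2 * (\<gamma>^2 * h^2 * ((1 + 2*\<gamma>*h) / (2*\<gamma>))) = 2 * \<gamma>^2 * h^2 * (1 + 2*\<gamma>*h)"
        using g unfolding c0sq by (simp add: field_simps power2_eq_square)
      also have "\<dots> \<le> 2 * \<gamma>^2 * h^2 * (1 + 2*\<gamma>)"
        using g h True by (intro mult_left_mono) auto
      finally have "2 * c0^2 * (\<gamma>^2 * h^2 * ((1 + 2*\<gamma>*h) / (2*\<gamma>))) + h^2 \<le> h^2 * (2 * \<gamma>^2 * (1 + 2 * \<gamma>) + 1)"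
        by (simp add: algebra_simps)
      also have "\<dots> = \<sigma>^2" using True g
        by (simp add: \<sigma>_def power_mult_distrib add_pos_nonneg algebra_simps)
      finally show ?thesis .
    qed
    show ?thesis using ev_var_b1[OF g h, where k=k and c=c0] bnd True unfolding b_def
      by (auto elim: eventually_mono)
  next
    case False
    have "c0^2 / \<gamma> + 1 = \<sigma>^2" using False g unfolding c0sq by (simp add: \<sigma>_def)
    then show ?thesis using ev_var_b0[OF g h, where k=k and c=c0] False unfolding b_def by simp
  qed
  have BM1: "is_BM1 P (\<lambda>t \<omega>. W t \<omega> $ i)" by (rule BM_coord[OF BM])
  have BMt1: "is_BM1 Pt (\<lambda>t \<omega>. Wt t \<omega> $ i)" by (rule BM_coord[OF BMt])
  define SP where "SP \<omega> = Sfun \<gamma> b h k i (\<lambda>j. Z (h * real j) \<omega>)" for \<omega>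
  define St where "St \<omega> = Sfun \<gamma> b h k i (\<lambda>j. Zt (h * real j) \<omega>)" for \<omega>
  have Sm: "Sfun \<gamma> b h k i \<in> borel_measurable (Pi\<^sub>M UNIV (\<lambda>_. borel))"
    unfolding Sfun_def Qi_def by measurable
  have SPm: "SP \<in> borel_measurable P"
    unfolding SP_def using measurable_comp[OF PiM_meas_Z[OF sol h] Sm] by (simp add: comp_def)
  have Stm: "St \<in> borel_measurable Pt"
    unfolding St_def using measurable_comp[OF PiM_meas_Z[OF solt h] Sm] by (simp add: comp_def)
  have limP: "AE \<omega> in P. (\<lambda>r. \<Sum>l<k*r. coefS \<gamma> c0 b h k r l * Dinc (\<lambda>t \<omega>. W t \<omega> $ i) (h / real r) l \<omega>) \<longlonglongrightarrow> SP \<omega> - m"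
    using process_limit[OF g BM sol h k, where b=b and i=i] unfolding SP_def m_def E_def c0_def by simp
  have limPt: "AE \<omega> in Pt. (\<lambda>r. \<Sum>l<k*r. coefS \<gamma> c0 b h k r l * Dinc (\<lambda>t \<omega>. Wt t \<omega> $ i) (h / real r) l \<omega>) \<longlonglongrightarrow> St \<omega> - mt"
    using process_limit[OF g BMt solt h k, where b=b and i=i] unfolding St_def mt_def E_def c0_def by simp
  define gg where "gg y = sG ((y - (m + mt)/2) / (\<sigma> + \<bar>m - mt\<bar>))" for y
  have LA: "(10/81) * (\<bar>m - mt\<bar> / (\<sigma> + \<bar>m - mt\<bar>)) \<le> \<bar>(\<integral>\<omega>. gg (SP \<omega>) \<partial>P) - (\<integral>\<omega>. gg (St \<omega>) \<partial>Pt)\<bar>"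
    unfolding gg_def by (rule limit_argument[OF BM1 BMt1 h k SPm Stm limP limPt var sig mm])
  have ggm: "gg \<in> borel_measurable borel" unfolding gg_def by measurable
  have fm: "(\<lambda>\<zeta>. gg (Sfun \<gamma> b h k i \<zeta>)) \<in> borel_measurable (Pi\<^sub>M UNIV (\<lambda>_. borel))"
    using measurable_comp[OF Sm ggm] by (simp add: comp_def)
  define F where "F \<omega> = Sfun \<gamma> b h k i (\<lambda>j. fst (\<omega> j))" for \<omega> :: "nat \<Rightarrow> ((real ^ 'd) \<times> (real ^ 'd)) \<times> ((real ^ 'd) \<times> (real ^ 'd))"
  define Ft where "Ft \<omega> = Sfun \<gamma> b h k i (\<lambda>j. snd (\<omega> j))" for \<omega> :: "nat \<Rightarrow> ((real ^ 'd) \<times> (real ^ 'd)) \<times> ((real ^ 'd) \<times> (real ^ 'd))"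
  have T1: "(\<integral>\<omega>. gg (F \<omega>) \<partial>\<mu>) = (\<integral>\<omega>. gg (SP \<omega>) \<partial>P)"
    unfolding F_def SP_def by (rule transfer_int[OF PiM_meas_proj(1)[OF sets] PiM_meas_Z[OF sol h] d1 fm])
  have T2: "(\<integral>\<omega>. gg (Ft \<omega>) \<partial>\<mu>) = (\<integral>\<omega>. gg (St \<omega>) \<partial>Pt)"
    unfolding Ft_def St_def by (rule transfer_int[OF PiM_meas_proj(2)[OF sets] PiM_meas_Z[OF solt h] d2 fm])
  have Fm: "F \<in> borel_measurable \<mu>"
    unfolding F_def using measurable_comp[OF PiM_meas_proj(1)[OF sets] Sm] by (simp add: comp_def)
  have Ftm: "Ft \<in> borel_measurable \<mu>"
    unfolding Ft_def using measurable_comp[OF PiM_meas_proj(2)[OF sets] Sm] by (simp add: comp_def)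
  define G where "G = {\<omega> \<in> space \<mu>. \<forall>k. fst (fst (\<omega> k)) + (1 / \<gamma>) *\<^sub>R snd (fst (\<omega> k))
                                       = fst (snd (\<omega> k)) + (1 / \<gamma>) *\<^sub>R snd (snd (\<omega> k))}"
  have Gs: "G \<in> sets \<mu>" using QG measure_notin_sets[of G \<mu>] unfolding G_def by fastforce
  define Zk where "Zk = {\<omega> \<in> space \<mu>. fst (\<omega> k) \<noteq> snd (\<omega> k)}"
  have Zks: "Zk \<in> sets \<mu>"
  proof -
    have "Measurable.pred (Pi\<^sub>M UNIV (\<lambda>_. borel)) (\<lambda>\<zeta>::nat \<Rightarrow> ((real^'d) \<times> (real^'d)) \<times> ((real^'d) \<times> (real^'d)). fst (\<zeta> k) \<noteq> snd (\<zeta> k))"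
      by measurable
    then have "Measurable.pred \<mu> (\<lambda>\<zeta>. fst (\<zeta> k) \<noteq> snd (\<zeta> k))"
      by (subst measurable_cong_sets[OF sets refl])
    then show ?thesis unfolding Zk_def by (simp add: pred_def)
  qed
  define Bad where "Bad = Zk \<union> (space \<mu> - G)"
  have Bads: "Bad \<in> sets \<mu>" unfolding Bad_def using Zks Gs by auto
  have inBad: "\<omega> \<in> Bad" if "\<omega> \<in> space \<mu>" "F \<omega> \<noteq> Ft \<omega>" for \<omega>
  proof (rule ccontr)
    assume "\<omega> \<notin> Bad"
    then have a: "fst (\<omega> k) = snd (\<omega> k)" and b: "\<omega> \<in> G" using that(1) unfolding Bad_def Zk_def by auto
    have "Qi \<gamma> i (fst (\<omega> j)) = Qi \<gamma> i (snd (\<omega> j))" for j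
      using b unfolding G_def Qi_vec by auto
    then have "F \<omega> = Ft \<omega>" unfolding F_def Ft_def by (rule Sfun_cong) (use a in simp)
    then show False using that(2) by simp
  qed
  have CB: "\<bar>(\<integral>\<omega>. gg (F \<omega>) \<partial>\<mu>) - (\<integral>\<omega>. gg (Ft \<omega>) \<partial>\<mu>)\<bar> \<le> 2 * measure \<mu> Bad"
    by (rule coupling_bound[OF pmu Fm Ftm ggm _ Bads inBad]) (simp add: gg_def sG_bound)
  have "measure \<mu> Bad \<le> measure \<mu> Zk + measure \<mu> (space \<mu> - G)"
    unfolding Bad_def by (rule measure_subadditive) (use Zks Gs in \<open>auto simp: mu.emeasure_eq_measure\<close>)
  also have "measure \<mu> (space \<mu> - G) = 0" using mu.prob_compl[OF Gs] QG unfolding G_def by simp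
  finally have MB: "measure \<mu> Bad \<le> measure \<mu> Zk" by simp
  have "(10/81) * (\<bar>m - mt\<bar> / (\<sigma> + \<bar>m - mt\<bar>)) \<le> 2 * measure \<mu> Zk"
    using LA CB MB unfolding T1 T2 by linarith
  then show ?thesis unfolding adm Zk_def E_def by simp
qed


theorem mainTheorem14:
  fixes \<gamma> :: real
    and P :: "'a measure" and W :: "real \<Rightarrow> 'a \<Rightarrow> real ^ 'd"
    and Pt :: "'b measure" and Wt :: "real \<Rightarrow> 'b \<Rightarrow> real ^ 'd"
    and z zt :: "(real ^ 'd) \<times> (real ^ 'd)"
    and Z :: "real \<Rightarrow> 'a \<Rightarrow> (real ^ 'd) \<times> (real ^ 'd)"
    and Zt :: "real \<Rightarrow> 'b \<Rightarrow> (real ^ 'd) \<times> (real ^ 'd)"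
  assumes "\<gamma> > 0"
    and "is_BM P W" and "is_BM Pt Wt"
    and "solves_kinetic \<gamma> P W z Z" and "solves_kinetic \<gamma> Pt Wt zt Zt"
    and "z \<noteq> zt"
  shows "\<exists>c>0. \<forall>h>0. \<forall>\<mu> :: (nat \<Rightarrow> ((real ^ 'd) \<times> (real ^ 'd)) \<times> ((real ^ 'd) \<times> (real ^ 'd))) measure.
           (prob_space \<mu> \<and>
            sets \<mu> = sets (Pi\<^sub>M UNIV (\<lambda>_. borel)) \<and>
            distr \<mu> (Pi\<^sub>M UNIV (\<lambda>_. borel)) (\<lambda>\<omega> k. fst (\<omega> k))
              = distr P (Pi\<^sub>M UNIV (\<lambda>_. borel)) (\<lambda>\<omega> k. Z (h * real k) \<omega>) \<and>
            distr \<mu> (Pi\<^sub>M UNIV (\<lambda>_. borel)) (\<lambda>\<omega> k. snd (\<omega> k))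
              = distr Pt (Pi\<^sub>M UNIV (\<lambda>_. borel)) (\<lambda>\<omega> k. Zt (h * real k) \<omega>) \<and>
            markov_seq \<mu> \<and>
            measure \<mu> {\<omega> \<in> space \<mu>. \<forall>k. fst (fst (\<omega> k)) + (1 / \<gamma>) *\<^sub>R snd (fst (\<omega> k))
                                       = fst (snd (\<omega> k)) + (1 / \<gamma>) *\<^sub>R snd (snd (\<omega> k))} = 1)
           \<longrightarrow> (\<forall>k::nat. measure \<mu> {\<omega> \<in> space \<mu>. fst (\<omega> k) \<noteq> snd (\<omega> k)}
                  \<ge> c * min 1 (exp (- \<gamma> * h * real k) / h))"
proof -
  note g = assms(1) and BM = assms(2) and BMt = assms(3) and sol = assms(4) and solt = assms(5)
    and zz = assms(6)
  have qbad: False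
    if h: "h > 0" and pmu: "prob_space \<mu>"
      and sets: "sets \<mu> = sets (Pi\<^sub>M UNIV (\<lambda>_. borel))"
      and d1: "distr \<mu> (Pi\<^sub>M UNIV (\<lambda>_. borel)) (\<lambda>\<omega> k. fst (\<omega> k))
              = distr P (Pi\<^sub>M UNIV (\<lambda>_. borel)) (\<lambda>\<omega> k. Z (h * real k) \<omega>)"
      and d2: "distr \<mu> (Pi\<^sub>M UNIV (\<lambda>_. borel)) (\<lambda>\<omega> k. snd (\<omega> k))
              = distr Pt (Pi\<^sub>M UNIV (\<lambda>_. borel)) (\<lambda>\<omega> k. Zt (h * real k) \<omega>)"
      and QG: "measure \<mu> {\<omega> \<in> space \<mu>. \<forall>k. fst (fst (\<omega> k)) + (1 / \<gamma>) *\<^sub>R snd (fst (\<omega> k))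
                                       = fst (snd (\<omega> k)) + (1 / \<gamma>) *\<^sub>R snd (snd (\<omega> k))} = 1"
      and Qne: "fst z + (1 / \<gamma>) *\<^sub>R snd z \<noteq> fst zt + (1 / \<gamma>) *\<^sub>R snd zt"
    for h and \<mu> :: "(nat \<Rightarrow> ((real ^ 'd) \<times> (real ^ 'd)) \<times> ((real ^ 'd) \<times> (real ^ 'd))) measure"
  proof -
    interpret mu: prob_space \<mu> by (rule pmu)
    define G where "G = {\<omega> \<in> space \<mu>. \<forall>k. fst (fst (\<omega> k)) + (1 / \<gamma>) *\<^sub>R snd (fst (\<omega> k))
                                       = fst (snd (\<omega> k)) + (1 / \<gamma>) *\<^sub>R snd (snd (\<omega> k))}"
    have Gs: "G \<in> sets \<mu>" using QG measure_notin_sets[of G \<mu>] unfolding G_def by fastforce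
    have "AE \<omega> in \<mu>. fst (\<omega> 0) = z \<and> snd (\<omega> 0) = zt"
      by (rule mu_AE0[OF BM BMt sol solt h sets d1 d2])
    then have "AE \<omega> in \<mu>. \<omega> \<notin> G"
    proof eventually_elim
      case (elim \<omega>)
      show ?case
      proof
        assume "\<omega> \<in> G"
        then have "fst (fst (\<omega> 0)) + (1 / \<gamma>) *\<^sub>R snd (fst (\<omega> 0)) = fst (snd (\<omega> 0)) + (1 / \<gamma>) *\<^sub>R snd (snd (\<omega> 0))"
          unfolding G_def by blast
        then show False using elim Qne by simp
      qed
    qed
    then have "measure \<mu> G = 0" using mu.prob_eq_0[OF Gs] by simp
    then show False using QG unfolding G_def by simp
  qed
  show ?thesis
  proof (cases "snd z = snd zt")
    case True
    have Qne: "fst z + (1 / \<gamma>) *\<^sub>R snd z \<noteq> fst zt + (1 / \<gamma>) *\<^sub>R snd zt"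
      using True zz by (simp add: prod_eq_iff)
    show ?thesis
    proof (rule exI[of _ 1], intro conjI allI impI)
      show "(0::real) < 1" by simp
      fix h :: real and \<mu> :: "(nat \<Rightarrow> ((real ^ 'd) \<times> (real ^ 'd)) \<times> ((real ^ 'd) \<times> (real ^ 'd))) measure"
        and k :: nat
      assume h: "h > 0"
      assume prem: "prob_space \<mu> \<and>
            sets \<mu> = sets (Pi\<^sub>M UNIV (\<lambda>_. borel)) \<and>
            distr \<mu> (Pi\<^sub>M UNIV (\<lambda>_. borel)) (\<lambda>\<omega> k. fst (\<omega> k))
              = distr P (Pi\<^sub>M UNIV (\<lambda>_. borel)) (\<lambda>\<omega> k. Z (h * real k) \<omega>) \<and>
            distr \<mu> (Pi\<^sub>M UNIV (\<lambda>_. borel)) (\<lambda>\<omega> k. snd (\<omega> k))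
              = distr Pt (Pi\<^sub>M UNIV (\<lambda>_. borel)) (\<lambda>\<omega> k. Zt (h * real k) \<omega>) \<and>
            markov_seq \<mu> \<and>
            measure \<mu> {\<omega> \<in> space \<mu>. \<forall>k. fst (fst (\<omega> k)) + (1 / \<gamma>) *\<^sub>R snd (fst (\<omega> k))
                                       = fst (snd (\<omega> k)) + (1 / \<gamma>) *\<^sub>R snd (snd (\<omega> k))} = 1"
      have False
        apply (rule qbad[OF h])
        using prem Qne by blast+
      then show "1 * min 1 (exp (- \<gamma> * h * real k) / h) \<le> measure \<mu> {\<omega> \<in> space \<mu>. fst (\<omega> k) \<noteq> snd (\<omega> k)}" ..
    qed
  next
    case False
    then obtain i where vi: "snd z $ i \<noteq> snd zt $ i" by (auto simp: vec_eq_iff)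
    define dv where "dv = \<bar>snd z $ i - snd zt $ i\<bar>"
    have dv: "dv > 0" using vi by (simp add: dv_def)
    define K1 where "K1 = sqrt (2 * \<gamma>^2 * (1 + 2 * \<gamma>) + 1)"
    have K1p: "K1 > 0"
    proof -
      have "2 * \<gamma>^2 * (1 + 2 * \<gamma>) \<ge> 0" using g by simp
      then show ?thesis unfolding K1_def by simp
    qed
    define C where "C = (5/162) * min 1 (min (dv/K1) (dv/sqrt 3))"
    have Cp: "C > 0" using dv K1p by (simp add: C_def)
    have C1: "C \<le> 1" unfolding C_def by simp
    show ?thesis
    proof (rule exI[of _ C], intro conjI allI impI)
      show "C > 0" by (rule Cp)
      fix h :: real and \<mu> :: "(nat \<Rightarrow> ((real ^ 'd) \<times> (real ^ 'd)) \<times> ((real ^ 'd) \<times> (real ^ 'd))) measure"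
        and k :: nat
      assume h: "h > 0"
      assume prem: "prob_space \<mu> \<and>
            sets \<mu> = sets (Pi\<^sub>M UNIV (\<lambda>_. borel)) \<and>
            distr \<mu> (Pi\<^sub>M UNIV (\<lambda>_. borel)) (\<lambda>\<omega> k. fst (\<omega> k))
              = distr P (Pi\<^sub>M UNIV (\<lambda>_. borel)) (\<lambda>\<omega> k. Z (h * real k) \<omega>) \<and>
            distr \<mu> (Pi\<^sub>M UNIV (\<lambda>_. borel)) (\<lambda>\<omega> k. snd (\<omega> k))
              = distr Pt (Pi\<^sub>M UNIV (\<lambda>_. borel)) (\<lambda>\<omega> k. Zt (h * real k) \<omega>) \<and>
            markov_seq \<mu> \<and>
            measure \<mu> {\<omega> \<in> space \<mu>. \<forall>k. fst (fst (\<omega> k)) + (1 / \<gamma>) *\<^sub>R snd (fst (\<omega> k))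
                                       = fst (snd (\<omega> k)) + (1 / \<gamma>) *\<^sub>R snd (snd (\<omega> k))} = 1"
      then have pmu: "prob_space \<mu>" and sets: "sets \<mu> = sets (Pi\<^sub>M UNIV (\<lambda>_. borel))"
        and d1: "distr \<mu> (Pi\<^sub>M UNIV (\<lambda>_. borel)) (\<lambda>\<omega> k. fst (\<omega> k))
              = distr P (Pi\<^sub>M UNIV (\<lambda>_. borel)) (\<lambda>\<omega> k. Z (h * real k) \<omega>)"
        and d2: "distr \<mu> (Pi\<^sub>M UNIV (\<lambda>_. borel)) (\<lambda>\<omega> k. snd (\<omega> k))
              = distr Pt (Pi\<^sub>M UNIV (\<lambda>_. borel)) (\<lambda>\<omega> k. Zt (h * real k) \<omega>)"
        and QG: "measure \<mu> {\<omega> \<in> space \<mu>. \<forall>k. fst (fst (\<omega> k)) + (1 / \<gamma>) *\<^sub>R snd (fst (\<omega> k))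
                                       = fst (snd (\<omega> k)) + (1 / \<gamma>) *\<^sub>R snd (snd (\<omega> k))} = 1"
        by blast+
      interpret mu: prob_space \<mu> by (rule pmu)
      show "C * min 1 (exp (- \<gamma> * h * real k) / h) \<le> measure \<mu> {\<omega> \<in> space \<mu>. fst (\<omega> k) \<noteq> snd (\<omega> k)}"
      proof (cases "k = 0")
        case True
        have "AE \<omega> in \<mu>. fst (\<omega> 0) = z \<and> snd (\<omega> 0) = zt"
          by (rule mu_AE0[OF BM BMt sol solt h sets d1 d2])
        then have ae: "AE \<omega> in \<mu>. fst (\<omega> 0) \<noteq> snd (\<omega> 0)" using zz by (auto elim: AE_mp)
        have ms: "{\<omega> \<in> space \<mu>. fst (\<omega> 0) \<noteq> snd (\<omega> 0)} \<in> sets \<mu>"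
        proof -
          have "Measurable.pred (Pi\<^sub>M UNIV (\<lambda>_. borel)) (\<lambda>\<zeta>::nat \<Rightarrow> ((real^'d) \<times> (real^'d)) \<times> ((real^'d) \<times> (real^'d)). fst (\<zeta> 0) \<noteq> snd (\<zeta> 0))"
            by measurable
          then have "Measurable.pred \<mu> (\<lambda>\<zeta>. fst (\<zeta> 0) \<noteq> snd (\<zeta> 0))"
            by (subst measurable_cong_sets[OF sets refl])
          then show ?thesis by (simp add: pred_def)
        qed
        have "measure \<mu> {\<omega> \<in> space \<mu>. fst (\<omega> 0) \<noteq> snd (\<omega> 0)} = 1"
          using mu.prob_Collect_eq_1[OF ms] ae by simp
        moreover have "C * min 1 (exp (- \<gamma> * h * real k) / h) \<le> 1"
        proof -
          have "C * min 1 (exp (- \<gamma> * h * real k) / h) \<le> 1 * 1"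
            using Cp C1 h by (intro mult_mono) auto
          then show ?thesis by simp
        qed
        ultimately show ?thesis using True by simp
      next
        case False
        then have k: "k > 0" by simp
        define E where "E = exp (-\<gamma> * (real k * h))"
        have Epos: "E > 0" by (simp add: E_def)
        have EE: "exp (- \<gamma> * h * real k) = E" unfolding E_def by (simp add: algebra_simps)
        have MK: "(5/81) * ((E * dv) / ((if h \<le> 1 then K1 * h else sqrt 3) + E * dv))
             \<le> measure \<mu> {\<omega> \<in> space \<mu>. fst (\<omega> k) \<noteq> snd (\<omega> k)}"
          using main_k[OF g BM BMt sol solt vi h k pmu sets d1 d2 QG] unfolding E_def dv_def K1_def by simp
        have FA: "(5/162) * min 1 (min (dv/K1) (dv/sqrt 3)) * min 1 (E / h)
             \<le> (5/81) * ((E * dv) / ((if h \<le> 1 then K1 * h else sqrt 3) + E * dv))"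
          by (rule final_arith[OF h dv K1p _ Epos]) simp
        show ?thesis unfolding EE using MK FA unfolding C_def by linarith
      qed
    qed
  qed
qed


end
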